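(* Let $n\ge p\ge 1$, $A$ an $n\times n$ symmetric matrix, $N=\operatorname{diag}(\mu_1,\dots,\mu_p)$ with $0<\mu_1<\dots<\mu_p$, $f(X)=\operatorname{tr}(X^TAXN)$ on $\mathrm{St}(p,n)$, and $R_X(\xi)=\mathrm{qf}(X+\xi)$ the QR retraction. For any (smooth) Riemannian metric $\langle\cdot,\cdot\rangle$ on $\mathrm{St}(p,n)$ there exists $L>0$ such that \[ \bigl|\mathrm{D}(f\circ R_X)(t\eta)[\eta]-\mathrm{D}(f\circ R_X)(0)[\eta]\bigr|\le Lt \] for all $X\in\mathrm{St}(p,n)$, $\eta\in T_X\mathrm{St}(p,n)$ with $\|\eta\|_X=1$ (norm from that metric), and $t\ge 0$. In particular ($p=1$) this holds for $f(x)=x^TAx$ on $S^{n-1}$ with the metric $g_x(\xi,\eta)=\xi^TG_x\eta$, $G_x=\operatorname{diag}(10000(x^{(1)})^2+1,1,\dots,1)$, and the retraction $R_x(\xi)=(x+\xi)/\|x+\xi\|$.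
   Context: $\mathrm{St}(p,n)=\{X\in\mathbb{R}^{n\times p}: X^TX=I_p\}$; for a full-rank $B\in\mathbb{R}^{n\times p}$, $\mathrm{qf}(B)$ denotes the $Q$-factor of the unique decomposition $B=QR'$ with $Q\in\mathrm{St}(p,n)$ and $R'$ upper triangular with positive diagonal. $x^{(1)}$ denotes the first component of $x$. *)

theory Defs
  imports "HOL-Analysis.Analysis"
begin

fun ddiff :: "('a::real_normed_vector \<Rightarrow> 'b::real_normed_vector) \<Rightarrow> 'a list \<Rightarrow> 'a \<Rightarrow> 'b" where
  "ddiff f [] = f"
| "ddiff f (v # vs) = (\<lambda>x. frechet_derivative (ddiff f vs) (at x) v)"

definition smooth_on :: "'a::real_normed_vector set \<Rightarrow> ('a \<Rightarrow> 'b::real_normed_vector) \<Rightarrow> bool" where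
  "smooth_on U f \<longleftrightarrow> open U \<and>
     (\<forall>vs. continuous_on U (ddiff f vs) \<and> (\<forall>x\<in>U. ddiff f vs differentiable (at x)))"

definition smooth_on_subset :: "'a::real_normed_vector set \<Rightarrow> ('a \<Rightarrow> 'b::real_normed_vector) \<Rightarrow> bool" where
  "smooth_on_subset S f \<longleftrightarrow>
     (\<forall>z\<in>S. \<exists>U F. z \<in> U \<and> smooth_on U F \<and> (\<forall>w\<in>U \<inter> S. F w = f w))"

definition stiefel :: "(real^'p^'n) set" where
  "stiefel = {X. transpose X ** X = mat 1}"

definition stiefel_tangent :: "real^'p^'n \<Rightarrow> (real^'p^'n) set" where
  "stiefel_tangent X = {\<xi>. transpose X ** \<xi> + transpose \<xi> ** X = 0}"

definition upper_triangular_pos :: "((real, 'p::{finite,linorder}) vec, 'p) vec \<Rightarrow> bool" where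
  "upper_triangular_pos R \<longleftrightarrow> (\<forall>i j. j < i \<longrightarrow> R $ i $ j = 0) \<and> (\<forall>i. R $ i $ i > 0)"

text \<open>Q-factor of the (unique) QR decomposition B = Q R, Q in St(p,n), R upper triangular with
  positive diagonal; columns ordered by the linear order of the index type 'p.\<close>
definition qf :: "((real, 'p::{finite,linorder}) vec, 'n::finite) vec \<Rightarrow> ((real, 'p) vec, 'n) vec" where
  "qf B = (THE Q. Q \<in> stiefel \<and> (\<exists>R. upper_triangular_pos R \<and> B = Q ** R))"

definition riemannian_metric_stiefel ::
  "(real^'p^'n \<Rightarrow> real^'p^'n \<Rightarrow> real^'p^'n \<Rightarrow> real) \<Rightarrow> bool" where
  "riemannian_metric_stiefel g \<longleftrightarrow>
     (\<forall>X\<in>stiefel.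
        (\<forall>\<xi>\<in>stiefel_tangent X. \<forall>\<eta>\<in>stiefel_tangent X. \<forall>\<zeta>\<in>stiefel_tangent X. \<forall>a b::real.
            g X (a *\<^sub>R \<xi> + b *\<^sub>R \<eta>) \<zeta> = a * g X \<xi> \<zeta> + b * g X \<eta> \<zeta>) \<and>
        (\<forall>\<xi>\<in>stiefel_tangent X. \<forall>\<eta>\<in>stiefel_tangent X. g X \<xi> \<eta> = g X \<eta> \<xi>) \<and>
        (\<forall>\<xi>\<in>stiefel_tangent X. \<xi> \<noteq> 0 \<longrightarrow> g X \<xi> \<xi> > 0)) \<and>
     smooth_on_subset {(X, \<xi>, \<eta>). X \<in> stiefel \<and> \<xi> \<in> stiefel_tangent X \<and> \<eta> \<in> stiefel_tangent X}
       (\<lambda>(X, \<xi>, \<eta>). g X \<xi> \<eta>)"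

definition brockett :: "real^'n^'n \<Rightarrow> real^'p^'p \<Rightarrow> real^'p^'n \<Rightarrow> real" where
  "brockett A N X = trace (transpose X ** A ** X ** N)"

definition diag_mat :: "real^'p \<Rightarrow> real^'p^'p" where
  "diag_mat \<mu> = (\<chi> i j. if i = j then \<mu> $ i else 0)"

definition first_idx :: "'n::{finite,linorder}" where
  "first_idx = Min UNIV"

definition example_metric :: "(real, 'n::{finite,linorder}) vec \<Rightarrow> (real, 'n) vec \<Rightarrow> (real, 'n) vec \<Rightarrow> real" where
  "example_metric x \<xi> \<eta> =
     \<xi> \<bullet> ((\<chi> i j. if i = j then (if i = first_idx then 10000 * (x $ first_idx)^2 + 1 else 1) else 0) *v \<eta>)"

definition sphere_retr :: "real^'n \<Rightarrow> real^'n \<Rightarrow> real^'n" where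
  "sphere_retr x \<xi> = (1 / norm (x + \<xi>)) *\<^sub>R (x + \<xi>)"

definition rayleigh :: "real^'n^'n \<Rightarrow> real^'n \<Rightarrow> real" where
  "rayleigh A x = x \<bullet> (A *v x)"

end

theory Submission
  imports Defs
begin


definition phi :: "real \<Rightarrow> real \<Rightarrow> real \<Rightarrow> real \<Rightarrow> real \<Rightarrow> real" where
  "phi a b c m s = (a + 2*b* s + c* s^2) / (1 + m* s^2)"
definition dphi :: "real \<Rightarrow> real \<Rightarrow> real \<Rightarrow> real \<Rightarrow> real \<Rightarrow> real" where
  "dphi a b c m s = (2*b + 2*(c - a*m)* s - 2*b*m* s^2) / (1 + m* s^2)^2"

lemma phi_deriv:
  assumes "m \<ge> 0"
  shows "((phi a b c m) has_real_derivative dphi a b c m s) (at s)"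
proof -
  have d: "1 + m* s^2 \<noteq> 0" using assms by (simp add: add_nonneg_eq_0_iff)
  show ?thesis unfolding phi_def[abs_def] dphi_def
    apply (rule derivative_eq_intros refl | simp add: d)+
    using d apply (simp add: field_simps power2_eq_square)
    done
qed

lemma dphi_diff:
  assumes "m \<ge> 0"
  shows "dphi a b c m t - dphi a b c m 0 = t * (2*(c - a*m) - 6*b*m*t - 2*b*m^2*t^3) / (1+m*t^2)^2"
proof -
  have d: "1 + m*t^2 \<noteq> 0" using assms by (simp add: add_nonneg_eq_0_iff)
  have "dphi a b c m t - dphi a b c m 0 = (2*b + 2*(c - a*m)*t - 2*b*m*t^2 - 2*b*(1+m*t^2)^2) / (1+m*t^2)^2"
    unfolding dphi_def using d by (simp add: diff_divide_distrib)
  also have "2*b + 2*(c - a*m)*t - 2*b*m*t^2 - 2*b*(1+m*t^2)^2 = t * (2*(c - a*m) - 6*b*m*t - 2*b*m^2*t^3)"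
    by (simp add: algebra_simps power2_eq_square power3_eq_cube)
  finally show ?thesis .
qed

lemma tri3: "\<bar>(x::real) - 6*y - 2*z\<bar> \<le> \<bar>x\<bar> + 6*\<bar>y\<bar> + 2*\<bar>z\<bar>" by arith

lemma dphi_bound:
  assumes m: "m \<ge> 0" and K: "K \<ge> 0" and a: "\<bar>a\<bar> \<le> K" and b: "b^2 \<le> K^2 * m" and c: "\<bar>c\<bar> \<le> K*m"
    and t: "t \<ge> 0"
  shows "\<bar>dphi a b c m t - dphi a b c m 0\<bar> \<le> 9*K*m*t"
proof -
  define D where "D = 1 + m*t^2"
  have D1: "D \<ge> 1" using m t unfolding D_def by simp
  have D2: "D^2 \<ge> D" using D1 by (simp add: power2_eq_square)
  have e1: "\<bar>2*(c - a*m)\<bar> \<le> 4*K*m"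
  proof -
    have "\<bar>a*m\<bar> \<le> K*m" using a m by (simp add: abs_mult mult_right_mono)
    moreover have "\<bar>c - a*m\<bar> \<le> \<bar>c\<bar> + \<bar>a*m\<bar>" by (rule abs_triangle_ineq4)
    ultimately show ?thesis using c by (simp add: abs_mult)
  qed
  have e2: "\<bar>b*m*t\<bar> \<le> K*m/2 * D"
  proof -
    have "(b*m*t)^2 = b^2 * m^2*t^2" by (simp add: power_mult_distrib)
    also have "\<dots> \<le> K^2*m*m^2*t^2" using b m by (simp add: mult_right_mono)
    also have "\<dots> \<le> (K*m/2*D)^2"
    proof -
      have "(1 + m*t^2)^2 - 4*(m*t^2) = (1 - m*t^2)^2" by (simp add: power2_eq_square algebra_simps)
      hence "4*(m*t^2) \<le> (1 + m*t^2)^2" by (metis diff_ge_0_iff_ge zero_le_power2)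
      hence "K^2*m^2*(4*(m*t^2)) \<le> K^2*m^2*(1+m*t^2)^2" by (simp add: mult_left_mono)
      thus ?thesis unfolding D_def by (simp add: power_mult_distrib power2_eq_square algebra_simps)
    qed
    finally have "\<bar>b*m*t\<bar>^2 \<le> (K*m/2*D)^2" by simp
    moreover have "0 \<le> K*m/2*D" using K m D1 by simp
    ultimately show ?thesis by (rule power2_le_imp_le)
  qed
  have e3: "\<bar>b*m^2*t^3\<bar> \<le> K*m * D^2"
  proof -
    have "(b*m^2*t^3)^2 = b^2 * m^4*t^6" by (simp add: power_mult_distrib flip: power_mult)
    also have "\<dots> \<le> K^2*m*m^4*t^6" using b m by (simp add: mult_right_mono)
    also have "\<dots> = K^2*m^2*(m*t^2)^3" by (simp add: power_mult_distrib power_numeral_reduce flip: power_mult power_add)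
    also have "\<dots> \<le> K^2*m^2*(D^2)^2"
    proof -
      have u: "m*t^2 \<ge> 0" using m t by simp
      have "(m*t^2)^3 \<le> (1 + m*t^2)^4"
      proof (cases "m*t^2 \<le> 1")
        case True
        then have "(m*t^2)^3 \<le> 1" using u by (simp add: power_le_one)
        also have "1 \<le> (1 + m*t^2)^4" using u by simp
        finally show ?thesis .
      next
        case False
        then have "(m*t^2)^3 \<le> (m*t^2)^4" by (simp add: power_increasing)
        also have "\<dots> \<le> (1 + m*t^2)^4" using u by (simp add: power_mono)
        finally show ?thesis .
      qed
      then show ?thesis unfolding D_def by (simp add: mult_left_mono flip: power_mult)
    qed
    also have "\<dots> = (K*m*D^2)^2" by (simp add: power_mult_distrib)
    finally have "\<bar>b*m^2*t^3\<bar>^2 \<le> (K*m*D^2)^2" by simp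
    moreover have "0 \<le> K*m*D^2" using K m D1 by simp
    ultimately show ?thesis by (rule power2_le_imp_le)
  qed
  have "\<bar>2*(c - a*m) - 6*b*m*t - 2*b*m^2*t^3\<bar> \<le> 4*K*m*D^2 + 3*K*m*D^2 + 2*K*m*D^2"
  proof -
    have "1 \<le> D^2" using D1 by (simp add: one_le_power)
    hence "4*K*m*1 \<le> 4*K*m*D^2" using K m by (intro mult_left_mono) simp_all
    moreover have "3*K*m*D \<le> 3*K*m*D^2" using K m D2 by (simp add: mult_left_mono)
    moreover have "\<bar>2*(c - a*m) - 6*b*m*t - 2*b*m^2*t^3\<bar> \<le> \<bar>2*(c - a*m)\<bar> + 6*\<bar>b*m*t\<bar> + 2*\<bar>b*m^2*t^3\<bar>"
      using tri3[of "2*(c - a*m)" "b*m*t" "b*m^2*t^3"] by (simp add: mult.assoc)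
    moreover have "6*(K*m/2*D) = 3*K*m*D" by simp
    moreover have "6*\<bar>b*m*t\<bar> \<le> 6*(K*m/2*D)" using e2 by linarith
    ultimately show ?thesis using e1 e3 by linarith
  qed
  then have "\<bar>2*(c - a*m) - 6*b*m*t - 2*b*m^2*t^3\<bar> / D^2 \<le> 9*K*m"
    using D1 by (simp add: divide_le_eq algebra_simps)
  then have "t * (\<bar>2*(c - a*m) - 6*b*m*t - 2*b*m^2*t^3\<bar> / D^2) \<le> t * (9*K*m)"
    using t by (rule mult_left_mono)
  moreover have "\<bar>dphi a b c m t - dphi a b c m 0\<bar> = t * (\<bar>2*(c - a*m) - 6*b*m*t - 2*b*m^2*t^3\<bar> / D^2)"
    using dphi_diff[OF m, of a b c t] t unfolding D_def[symmetric] by (simp add: abs_mult abs_divide)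
  ultimately show ?thesis by (simp add: algebra_simps)
qed



lemma norm_mv: "norm (A *v x) \<le> norm A * norm (x::real^'n)"
  for A :: "real^'n^'m"
proof -
  have "(norm (A *v x))^2 = (\<Sum>i\<in>UNIV. (A *v x)$i * (A *v x)$i)"
    by (simp add: power2_norm_eq_inner inner_vec_def)
  also have "\<dots> = (\<Sum>i\<in>UNIV. (inner (A$i) x)^2)"
    by (simp only: matrix_vector_mul_component power2_eq_square)
  also have "\<dots> \<le> (\<Sum>i\<in>UNIV. (norm (A$i) * norm x)^2)"
  proof (rule sum_mono)
    fix i
    have "\<bar>inner (A$i) x\<bar> \<le> norm (A$i) * norm x" by (rule Cauchy_Schwarz_ineq2)
    then show "(inner (A$i) x)^2 \<le> (norm (A$i) * norm x)^2"
      using abs_le_square_iff by force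
  qed
  also have "\<dots> = (\<Sum>i\<in>UNIV. (norm (A$i))^2) * (norm x)^2"
    by (simp add: power_mult_distrib sum_distrib_right)
  also have "(\<Sum>i\<in>UNIV. (norm (A$i))^2) = (norm A)^2"
    by (simp add: power2_norm_eq_inner inner_vec_def)
  finally have "(norm (A *v x))^2 \<le> (norm A * norm x)^2" by (simp add: power_mult_distrib)
  then show ?thesis by (rule power2_le_imp_le) simp
qed

lemma inner_mv_transpose: "inner (A *v x) (y::real^'m) = inner (x::real^'n) (transpose A *v y)"
  by (metis dot_lmul_matrix inner_commute transpose_matrix_vector)

lemma inner_A_bound: "\<bar>inner u (A *v w)\<bar> \<le> norm u * norm A * norm (w::real^'n)"
  for A :: "real^'n^'m"
proof -
  have "\<bar>inner u (A *v w)\<bar> \<le> norm u * norm (A *v w)" by (rule Cauchy_Schwarz_ineq2)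
  also have "\<dots> \<le> norm u * (norm A * norm w)" by (simp add: mult_left_mono norm_mv)
  finally show ?thesis by (simp add: mult.assoc)
qed

lemma rat_form:
  fixes x e :: "real^'n" and A :: "real^'n^'n"
  assumes "inner x x = 1" "inner x e = 0" "transpose A = A"
  shows "inner (x + s *\<^sub>R e) (A *v (x + s *\<^sub>R e)) / inner (x + s *\<^sub>R e) (x + s *\<^sub>R e)
     = phi (inner x (A *v x)) (inner x (A *v e)) (inner e (A *v e)) (inner e e) s"
proof -
  have sym: "inner e (A *v x) = inner x (A *v e)"
    by (metis assms(3) inner_commute inner_mv_transpose)
  have "inner (x + s *\<^sub>R e) (A *v (x + s *\<^sub>R e)) = inner x (A *v x) + 2*inner x (A *v e) * s + inner e (A *v e) * s^2"
    by (simp only: matrix_vector_right_distrib matrix_vector_mult_scaleR inner_add_left inner_add_right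
        inner_scaleR_left inner_scaleR_right sym) (simp add: power2_eq_square algebra_simps)
  moreover have "inner (x + s *\<^sub>R e) (x + s *\<^sub>R e) = 1 + inner e e * s^2"
    using assms by (simp only: inner_add_left inner_add_right inner_scaleR_left inner_scaleR_right inner_commute[of e x])
      (simp add: power2_eq_square)
  ultimately show ?thesis unfolding phi_def by simp
qed

lemma coef_bounds:
  fixes x e :: "real^'n" and A :: "real^'n^'n"
  assumes "norm x = 1"
  shows "\<bar>inner x (A *v x)\<bar> \<le> norm A" "(inner x (A *v e))^2 \<le> (norm A)^2 * inner e e"
    "\<bar>inner e (A *v e)\<bar> \<le> norm A * inner e e"
proof -
  show "\<bar>inner x (A *v x)\<bar> \<le> norm A" using inner_A_bound[of x A x] assms by simp
  have "\<bar>inner x (A *v e)\<bar> \<le> norm A * norm e" using inner_A_bound[of x A e] assms by simp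
  then have "(inner x (A *v e))^2 \<le> (norm A * norm e)^2"
    by (metis abs_le_square_iff abs_norm_cancel abs_mult)
  then show "(inner x (A *v e))^2 \<le> (norm A)^2 * inner e e"
    by (simp add: power_mult_distrib power2_norm_eq_inner)
  show "\<bar>inner e (A *v e)\<bar> \<le> norm A * inner e e" using inner_A_bound[of e A e]
    by (simp add: power2_norm_eq_inner[symmetric] power2_eq_square mult.commute mult.left_commute)
qed

lemma phi_lip:
  fixes x e :: "real^'n" and A :: "real^'n^'n"
  assumes "norm x = 1" "inner e e \<le> M" "t \<ge> 0"
  shows "\<bar>dphi (inner x (A *v x)) (inner x (A *v e)) (inner e (A *v e)) (inner e e) t
          - dphi (inner x (A *v x)) (inner x (A *v e)) (inner e (A *v e)) (inner e e) 0\<bar> \<le> 9 * norm A * M * t"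
proof -
  have "\<bar>dphi (inner x (A *v x)) (inner x (A *v e)) (inner e (A *v e)) (inner e e) t
          - dphi (inner x (A *v x)) (inner x (A *v e)) (inner e (A *v e)) (inner e e) 0\<bar> \<le> 9 * norm A * inner e e * t"
    by (rule dphi_bound) (use coef_bounds[OF assms(1)] assms in auto)
  also have "\<dots> \<le> 9 * norm A * M * t" using assms by (simp add: mult_left_mono mult_right_mono)
  finally show ?thesis .
qed




lemma diag_mv: "(\<chi> i j. if i = j then d i else 0) *v v = (\<chi> i. d i * v$i)" for v :: "real^'n"
  by (simp add: matrix_vector_mult_def vec_eq_iff if_distrib[of "\<lambda>z. z * _"] cong: if_cong)

lemma example_metric_ge: "inner \<eta> \<eta> \<le> example_metric (x::real^'n::{finite,linorder}) \<eta> \<eta>"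
proof -
  have "example_metric x \<eta> \<eta> = (\<Sum>i\<in>UNIV. \<eta>$i * ((if i = first_idx then 10000 * (x $ first_idx)^2 + 1 else 1) * \<eta>$i))"
    unfolding example_metric_def diag_mv[of "\<lambda>i. if i = first_idx then 10000 * (x $ first_idx)^2 + 1 else 1"]
    by (simp add: inner_vec_def)
  also have "\<dots> \<ge> (\<Sum>i\<in>UNIV. \<eta>$i * \<eta>$i)"
  proof (rule sum_mono)
    fix i
    have "\<eta>$i * \<eta>$i \<le> (if i = first_idx then 10000 * (x $ first_idx)^2 + 1 else 1) * (\<eta>$i * \<eta>$i)"
    proof -
      have y: "0 \<le> \<eta>$i*\<eta>$i" by simp
      have "\<eta>$i*\<eta>$i \<le> (10000*(x$first_idx)^2+1)*(\<eta>$i*\<eta>$i)" using y by (simp add: distrib_right)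
      then show ?thesis by auto
    qed
    then show "\<eta>$i * \<eta>$i \<le> \<eta>$i * ((if i = first_idx then 10000 * (x $ first_idx)^2 + 1 else 1) * \<eta>$i)"
      by (simp add: algebra_simps)
  qed
  finally show ?thesis by (simp add: inner_vec_def)
qed

lemma sphere_fun:
  fixes x \<eta> :: "real^'n" and A :: "real^'n^'n"
  assumes "norm x = 1" "inner x \<eta> = 0" "transpose A = A"
  shows "(\<lambda>s. rayleigh A (sphere_retr x (s *\<^sub>R \<eta>)))
     = phi (inner x (A *v x)) (inner x (A *v \<eta>)) (inner \<eta> (A *v \<eta>)) (inner \<eta> \<eta>)"
proof
  fix s
  let ?u = "x + s *\<^sub>R \<eta>"
  have "rayleigh A (sphere_retr x (s *\<^sub>R \<eta>)) = inner ?u (A *v ?u) / inner ?u ?u"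
    unfolding rayleigh_def sphere_retr_def
    by (simp add: matrix_vector_mult_scaleR power2_norm_eq_inner[symmetric] power2_eq_square)
  also have "\<dots> = phi (inner x (A *v x)) (inner x (A *v \<eta>)) (inner \<eta> (A *v \<eta>)) (inner \<eta> \<eta>) s"
    by (rule rat_form) (use assms in \<open>auto simp: norm_eq_1\<close>)
  finally show "rayleigh A (sphere_retr x (s *\<^sub>R \<eta>)) = phi (inner x (A *v x)) (inner x (A *v \<eta>)) (inner \<eta> (A *v \<eta>)) (inner \<eta> \<eta>) s" .
qed

lemma sphere_part:
  fixes A :: "((real, 'n::{finite,linorder}) vec, 'n) vec"
  assumes "transpose A = A"
  shows "\<exists>L>0. \<forall>x::(real, 'n) vec. norm x = 1 \<longrightarrow> (\<forall>\<eta>. x \<bullet> \<eta> = 0 \<longrightarrow> example_metric x \<eta> \<eta> = 1 \<longrightarrow>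
          (\<forall>t\<ge>0.
             \<bar>deriv (\<lambda>s. rayleigh A (sphere_retr x (s *\<^sub>R \<eta>))) t
              - deriv (\<lambda>s. rayleigh A (sphere_retr x (s *\<^sub>R \<eta>))) 0\<bar>
             \<le> L * t))"
proof (intro exI[of _ "9 * norm A + 1"] conjI allI impI)
  show "0 < 9 * norm A + 1" by (simp add: add_nonneg_pos)
  fix x \<eta> :: "(real, 'n) vec" and t :: real
  assume x: "norm x = 1" and o: "x \<bullet> \<eta> = 0" and g: "example_metric x \<eta> \<eta> = 1" and t: "0 \<le> t"
  have m: "inner \<eta> \<eta> \<le> 1" using example_metric_ge[of \<eta> x] g by simp
  let ?a = "inner x (A *v x)" and ?b = "inner x (A *v \<eta>)" and ?c = "inner \<eta> (A *v \<eta>)" and ?m = "inner \<eta> \<eta>"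
  have D: "deriv (\<lambda>s. rayleigh A (sphere_retr x (s *\<^sub>R \<eta>))) s = dphi ?a ?b ?c ?m s" for s
    unfolding sphere_fun[OF x o assms] by (rule DERIV_imp_deriv[OF phi_deriv]) simp
  have "\<bar>dphi ?a ?b ?c ?m t - dphi ?a ?b ?c ?m 0\<bar> \<le> 9 * norm A * 1 * t"
    by (rule phi_lip[OF x m t])
  also have "\<dots> \<le> (9 * norm A + 1) * t" using t by (simp add: mult_right_mono)
  finally show "\<bar>deriv (\<lambda>s. rayleigh A (sphere_retr x (s *\<^sub>R \<eta>))) t
              - deriv (\<lambda>s. rayleigh A (sphere_retr x (s *\<^sub>R \<eta>))) 0\<bar> \<le> (9 * norm A + 1) * t"
    unfolding D .
qed



lemma col_mult: "column j (Q ** R) = (\<Sum>i\<in>UNIV. R$i$j *\<^sub>R column i Q)"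
  for Q :: "real^'p^'n" and R :: "real^'q^'p"
  by (simp add: column_def matrix_matrix_mult_def vec_eq_iff sum_component mult.commute)

lemma stiefel_iff: "Q \<in> stiefel \<longleftrightarrow> (\<forall>i j. inner (column i Q) (column j Q) = (if i = j then 1 else 0))"
  by (simp add: stiefel_def matrix_mult_transpose_dot_column vec_eq_iff mat_def)

definition downset :: "'p::linorder set \<Rightarrow> bool" where
  "downset S \<longleftrightarrow> (\<forall>i j. j \<in> S \<longrightarrow> i \<le> j \<longrightarrow> i \<in> S)"

lemma orthonormal_indep:
  fixes f :: "'i \<Rightarrow> 'a::real_inner"
  assumes "\<And>i j. i \<in> S \<Longrightarrow> j \<in> S \<Longrightarrow> inner (f i) (f j) = (if i = j then 1 else 0)"
  shows "independent (f ` S)" "inj_on f S"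
proof -
  show "inj_on f S"
  proof (rule inj_onI)
    fix i j assume "i \<in> S" "j \<in> S" "f i = f j"
    then have "inner (f i) (f j) = 1" using assms[of i i] by simp
    then show "i = j" using assms[of i j] \<open>i\<in>S\<close> \<open>j\<in>S\<close> by (auto split: if_splits)
  qed
  show "independent (f ` S)"
  proof (rule pairwise_orthogonal_independent)
    show "pairwise orthogonal (f ` S)"
      unfolding pairwise_def orthogonal_def using assms by fastforce
    show "0 \<notin> f ` S" using assms by fastforce
  qed
qed

lemma span_cols_ge_dim:
  fixes Q :: "real^'p^'n"
  assumes orth: "\<And>i j. i \<in> S \<Longrightarrow> j \<in> S \<Longrightarrow> inner (column i Q) (column j Q) = (if i = j then 1 else 0)"
    and sub: "(\<lambda>i. column i Q) ` S \<subseteq> span ((\<lambda>i. column i B) ` S)"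
  shows "span ((\<lambda>i. column i Q) ` S) = span ((\<lambda>i. column i B) ` S)"
proof -
  have ind: "independent ((\<lambda>i. column i Q) ` S)" and inj: "inj_on (\<lambda>i. column i Q) S"
    using orthonormal_indep[of S "\<lambda>i. column i Q", OF orth] by auto
  have fin: "finite S" by simp
  have "dim (span ((\<lambda>i. column i B) ` S)) = dim ((\<lambda>i. column i B) ` S)" by simp
  also have "\<dots> \<le> card ((\<lambda>i. column i B) ` S)" by (rule dim_le_card') simp
  also have "\<dots> \<le> card S" by (rule card_image_le[OF fin])
  also have "\<dots> = card ((\<lambda>i. column i Q) ` S)" using card_image[OF inj] by simp
  finally have "span ((\<lambda>i. column i B) ` S) \<subseteq> span ((\<lambda>i. column i Q) ` S)"
    by (rule card_ge_dim_independent[OF sub ind])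
  moreover have "span ((\<lambda>i. column i Q) ` S) \<subseteq> span ((\<lambda>i. column i B) ` S)"
    using sub by (simp add: span_minimal)
  ultimately show ?thesis by blast
qed

lemma card_less_mono: "i < j \<Longrightarrow> card {l. l < i} < card {l::'p::{finite,linorder}. l < j}"
  by (rule psubset_card_mono) auto

lemma qr_col_in_span:
  fixes Q :: "((real,'p::{finite,linorder}) vec, 'n::finite) vec" and R :: "((real,'p) vec, 'p) vec"
  assumes R: "upper_triangular_pos R" and B: "B = Q ** R"
  shows "column j Q \<in> span ((\<lambda>i. column i B) ` {..j})"
proof (induction j rule: measure_induct_rule[of "\<lambda>j. card {l. l < j}"])
  case (less j)
  have cB: "column j B = (\<Sum>i\<in>UNIV. R$i$j *\<^sub>R column i Q)" using B col_mult by simp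
  also have "\<dots> = (\<Sum>i\<in>{..j}. R$i$j *\<^sub>R column i Q)"
  proof (rule sum.mono_neutral_right)
    show "\<forall>i\<in>UNIV - {..j}. R $ i $ j *\<^sub>R column i Q = 0"
      using R unfolding upper_triangular_pos_def by auto
  qed auto
  also have "\<dots> = R$j$j *\<^sub>R column j Q + (\<Sum>i\<in>{..<j}. R$i$j *\<^sub>R column i Q)"
  proof -
    have "{..j} = insert j {..<j}" by auto
    then show ?thesis by (simp add: sum.insert)
  qed
  finally have e1: "column j B - (\<Sum>i\<in>{..<j}. R$i$j *\<^sub>R column i Q) = R$j$j *\<^sub>R column j Q"
    by simp
  have nz: "R$j$j \<noteq> 0" using R unfolding upper_triangular_pos_def by (metis less_irrefl)
  have eq: "column j Q = (1 / R$j$j) *\<^sub>R (column j B - (\<Sum>i\<in>{..<j}. R$i$j *\<^sub>R column i Q))"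
    unfolding e1 using nz by simp
  have "column i Q \<in> span ((\<lambda>i. column i B) ` {..j})" if "i < j" for i
  proof -
    have "column i Q \<in> span ((\<lambda>i. column i B) ` {..i})"
      using less card_less_mono[OF that] by blast
    also have "\<dots> \<subseteq> span ((\<lambda>i. column i B) ` {..j})"
      using that by (intro span_mono image_mono) auto
    finally show ?thesis .
  qed
  moreover have "column j B \<in> span ((\<lambda>i. column i B) ` {..j})" by (intro span_base) auto
  ultimately show ?case unfolding eq
    by (intro span_scale span_diff span_sum) auto
qed

lemma qr_span:
  fixes Q :: "((real,'p::{finite,linorder}) vec, 'n::finite) vec" and R :: "((real,'p) vec, 'p) vec"
  assumes R: "upper_triangular_pos R" and B: "B = Q ** R" and S: "downset S"
  shows "span ((\<lambda>i. column i Q) ` S) = span ((\<lambda>i. column i B) ` S)"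
proof -
  have "column j B \<in> span ((\<lambda>i. column i Q) ` S)" if "j \<in> S" for j
  proof -
    have "column j B = (\<Sum>i\<in>UNIV. R$i$j *\<^sub>R column i Q)" using B col_mult by simp
    also have "\<dots> = (\<Sum>i\<in>S. R$i$j *\<^sub>R column i Q)"
    proof (rule sum.mono_neutral_right)
      show "\<forall>i\<in>UNIV - S. R $ i $ j *\<^sub>R column i Q = 0"
      proof
        fix i assume "i \<in> UNIV - S"
        then have "\<not> i \<le> j" using S \<open>j \<in> S\<close> unfolding downset_def by blast
        then have "R$i$j = 0" using R unfolding upper_triangular_pos_def by simp
        then show "R $ i $ j *\<^sub>R column i Q = 0" by simp
      qed
    qed auto
    also have "\<dots> \<in> span ((\<lambda>i. column i Q) ` S)"
      by (intro span_sum span_scale span_base) auto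
    finally show ?thesis .
  qed
  moreover have "column j Q \<in> span ((\<lambda>i. column i B) ` S)" if "j \<in> S" for j
  proof -
    have "column j Q \<in> span ((\<lambda>i. column i B) ` {..j})" by (rule qr_col_in_span[OF R B])
    also have "\<dots> \<subseteq> span ((\<lambda>i. column i B) ` S)"
      using S that unfolding downset_def by (intro span_mono image_mono) auto
    finally show ?thesis .
  qed
  ultimately show ?thesis unfolding span_eq by auto
qed




lemma ortho_expand:
  fixes f :: "'i \<Rightarrow> 'a::real_inner"
  assumes fin: "finite I"
    and orth: "\<And>i j. i \<in> I \<Longrightarrow> j \<in> I \<Longrightarrow> inner (f i) (f j) = (if i = j then 1 else 0)"
    and v: "v \<in> span (f ` I)"
  shows "v = (\<Sum>i\<in>I. inner (f i) v *\<^sub>R f i)"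
proof -
  have "span (f ` I) \<subseteq> {v. v = (\<Sum>i\<in>I. inner (f i) v *\<^sub>R f i)}"
  proof (rule span_minimal)
    show "f ` I \<subseteq> {v. v = (\<Sum>i\<in>I. inner (f i) v *\<^sub>R f i)}"
    proof clarify
      fix k assume k: "k \<in> I"
      have "(\<Sum>i\<in>I. inner (f i) (f k) *\<^sub>R f i) = (\<Sum>i\<in>I. (if i = k then f i else 0))"
        using orth k by (intro sum.cong) auto
      also have "\<dots> = f k" using k fin by (simp add: sum.delta')
      finally show "f k = (\<Sum>i\<in>I. inner (f i) (f k) *\<^sub>R f i)" by simp
    qed
    show "subspace {v. v = (\<Sum>i\<in>I. inner (f i) v *\<^sub>R f i)}"
      unfolding subspace_def
    proof (intro conjI ballI allI)
      show "0 \<in> {v. v = (\<Sum>i\<in>I. inner (f i) v *\<^sub>R f i)}" by simp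
      fix x y assume x: "x \<in> {v. v = (\<Sum>i\<in>I. inner (f i) v *\<^sub>R f i)}" and y: "y \<in> {v. v = (\<Sum>i\<in>I. inner (f i) v *\<^sub>R f i)}"
      have "(\<Sum>i\<in>I. inner (f i) (x + y) *\<^sub>R f i) = (\<Sum>i\<in>I. inner (f i) x *\<^sub>R f i) + (\<Sum>i\<in>I. inner (f i) y *\<^sub>R f i)"
        by (simp add: inner_add_right scaleR_add_left sum.distrib)
      then show "x + y \<in> {v. v = (\<Sum>i\<in>I. inner (f i) v *\<^sub>R f i)}" using x y by simp
    next
      fix c and x assume x: "x \<in> {v. v = (\<Sum>i\<in>I. inner (f i) v *\<^sub>R f i)}"
      have "(\<Sum>i\<in>I. inner (f i) (c *\<^sub>R x) *\<^sub>R f i) = c *\<^sub>R (\<Sum>i\<in>I. inner (f i) x *\<^sub>R f i)"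
        by (simp add: scaleR_sum_right)
      then show "c *\<^sub>R x \<in> {v. v = (\<Sum>i\<in>I. inner (f i) v *\<^sub>R f i)}" using x by simp
    qed
  qed
  then show ?thesis using v by blast
qed

lemma dotcol:
  fixes Q :: "real^'p^'n" and R :: "real^'p^'p"
  assumes Q: "Q \<in> stiefel" and B: "B = Q ** R"
  shows "inner (column j Q) (column k B) = R$j$k"
proof -
  have "inner (column j Q) (column k B) = (\<Sum>i\<in>UNIV. R$i$k * inner (column j Q) (column i Q))"
    using B by (simp add: col_mult inner_sum_right)
  also have "\<dots> = (\<Sum>i\<in>UNIV. R$i$k * (if j = i then 1 else 0))"
    using Q by (simp add: stiefel_iff)
  also have "\<dots> = (\<Sum>i\<in>UNIV. if j = i then R$i$k else 0)"
    by (intro sum.cong) auto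
  finally show ?thesis by simp
qed

lemma cols_eq: "(\<And>j. column j M = column j N) \<Longrightarrow> M = N"
  by (simp add: column_def vec_eq_iff)

lemma qr_unique:
  fixes Q Q' :: "((real,'p::{finite,linorder}) vec, 'n::finite) vec" and R R' :: "((real,'p) vec, 'p) vec"
  assumes Q: "Q \<in> stiefel" and R: "upper_triangular_pos R" and B: "B = Q ** R"
    and Q': "Q' \<in> stiefel" and R': "upper_triangular_pos R'" and B': "B = Q' ** R'"
  shows "Q' = Q"
proof (rule cols_eq)
  fix j
  have oQ: "\<And>i k. i \<in> {..j} \<Longrightarrow> k \<in> {..j} \<Longrightarrow> inner (column i Q) (column k Q) = (if i = k then 1 else 0)"
    using Q by (simp add: stiefel_iff)
  have dj: "downset {..j}" and dlj: "downset {..<j}" unfolding downset_def by auto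
  have "column j Q' \<in> span ((\<lambda>i. column i B) ` {..j})" by (rule qr_col_in_span[OF R' B'])
  also have "\<dots> = span ((\<lambda>i. column i Q) ` {..j})" by (rule qr_span[OF R B dj, symmetric])
  finally have "column j Q' = (\<Sum>i\<in>{..j}. inner (column i Q) (column j Q') *\<^sub>R column i Q)"
    by (intro ortho_expand[OF _ oQ]) auto
  also have "\<dots> = (\<Sum>i\<in>{..j}. if i = j then inner (column j Q) (column j Q') *\<^sub>R column j Q else 0)"
  proof (rule sum.cong)
    fix i assume "i \<in> {..j}"
    show "inner (column i Q) (column j Q') *\<^sub>R column i Q = (if i = j then inner (column j Q) (column j Q') *\<^sub>R column j Q else 0)"
    proof (cases "i = j")
      case False
      then have ij: "i < j" using \<open>i \<in> {..j}\<close> by auto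
      have "column i Q \<in> span ((\<lambda>i. column i B) ` {..i})" by (rule qr_col_in_span[OF R B])
      also have "\<dots> \<subseteq> span ((\<lambda>i. column i B) ` {..<j})" using ij by (intro span_mono image_mono) auto
      also have "\<dots> = span ((\<lambda>i. column i Q') ` {..<j})" by (rule qr_span[OF R' B' dlj, symmetric])
      finally have "orthogonal (column j Q') (column i Q)"
        by (rule orthogonal_to_span) (use Q' in \<open>auto simp: stiefel_iff orthogonal_def\<close>)
      then show ?thesis using False by (simp add: orthogonal_def inner_commute)
    qed simp
  qed simp
  also have "\<dots> = inner (column j Q) (column j Q') *\<^sub>R column j Q" by (simp add: sum.delta')
  finally have eq: "column j Q' = inner (column j Q) (column j Q') *\<^sub>R column j Q" .
  define c where "c = inner (column j Q) (column j Q')"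
  have "R'$j$j = inner (column j Q') (column j B)" using dotcol[OF Q' B'] by simp
  also have "\<dots> = c * R$j$j" using dotcol[OF Q B] eq by (metis c_def inner_scaleR_left)
  finally have "R'$j$j = c * R$j$j" .
  moreover have "0 < R'$j$j" using R' unfolding upper_triangular_pos_def by simp
  ultimately have "0 < c * R$j$j" by simp
  moreover have "0 < R$j$j" using R unfolding upper_triangular_pos_def by simp
  ultimately have cpos: "c > 0" by (metis zero_less_mult_pos2)
  have "1 = inner (column j Q') (column j Q')" using Q' by (simp add: stiefel_iff)
  also have "\<dots> = c * c" using eq Q unfolding c_def[symmetric] by (simp add: stiefel_iff)
  finally have "c = 1" using cpos by (metis abs_of_pos mult_1_right nonzero_mult_div_cancel_right real_sqrt_abs2 real_sqrt_one less_irrefl)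
  then show "column j Q' = column j Q" using eq c_def by simp
qed




lemma span_cols_sub:
  fixes B :: "real^'p^'n"
  shows "span ((\<lambda>i. column i B) ` T) \<subseteq> {B *v v | v. \<forall>i. i \<notin> T \<longrightarrow> v$i = 0}"
proof (rule span_minimal)
  show "(\<lambda>i. column i B) ` T \<subseteq> {B *v v | v. \<forall>i. i \<notin> T \<longrightarrow> v$i = 0}"
  proof clarify
    fix i assume "i \<in> T"
    have "column i B = B *v axis i 1"
      by (simp add: column_def matrix_vector_mult_def axis_def vec_eq_iff if_distrib[of "\<lambda>z. _ * z"] cong: if_cong)
    then show "\<exists>v. column i B = B *v v \<and> (\<forall>j. j \<notin> T \<longrightarrow> v $ j = 0)"
      using \<open>i \<in> T\<close> by (intro exI[of _ "axis i 1"]) (auto simp: axis_def)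
  qed
  show "subspace {B *v v | v. \<forall>i. i \<notin> T \<longrightarrow> v$i = 0}"
    unfolding subspace_def
  proof (intro conjI ballI allI)
    show "0 \<in> {B *v v | v. \<forall>i. i \<notin> T \<longrightarrow> v$i = 0}" by (intro CollectI exI[of _ 0]) auto
  next
    fix x y assume "x \<in> {B *v v | v. \<forall>i. i \<notin> T \<longrightarrow> v$i = 0}" "y \<in> {B *v v | v. \<forall>i. i \<notin> T \<longrightarrow> v$i = 0}"
    then obtain v w where "x = B *v v" "\<forall>i. i \<notin> T \<longrightarrow> v$i = 0" "y = B *v w" "\<forall>i. i \<notin> T \<longrightarrow> w$i = 0" by blast
    then show "x + y \<in> {B *v v | v. \<forall>i. i \<notin> T \<longrightarrow> v$i = 0}"
      by (intro CollectI exI[of _ "v + w"]) (auto simp: matrix_vector_right_distrib)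
  next
    fix c x assume "x \<in> {B *v v | v. \<forall>i. i \<notin> T \<longrightarrow> v$i = 0}"
    then obtain v where "x = B *v v" "\<forall>i. i \<notin> T \<longrightarrow> v$i = 0" by blast
    then show "c *\<^sub>R x \<in> {B *v v | v. \<forall>i. i \<notin> T \<longrightarrow> v$i = 0}"
      by (intro CollectI exI[of _ "c *\<^sub>R v"]) (auto simp: matrix_vector_mult_scaleR)
  qed
qed

lemma tmult_entry: "(transpose Q ** B)$i$j = inner (column i Q) (column j B)"
  for Q B :: "real^'p^'n"
  by (simp add: matrix_matrix_mult_def transpose_def column_def inner_vec_def mult.commute)

lemma qr_exists:
  fixes B :: "((real,'p::{finite,linorder}) vec, 'n::finite) vec"
  assumes inj: "\<And>v. B *v v = 0 \<Longrightarrow> v = 0"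
  shows "\<exists>Q R. Q \<in> stiefel \<and> upper_triangular_pos R \<and> B = Q ** R"
proof -
  let ?S = "\<lambda>j. span ((\<lambda>i. column i B) ` {..<j})"
  have "\<forall>j. \<exists>z. column j B - z \<in> ?S j \<and> (\<forall>w\<in>?S j. orthogonal z w)"
  proof
    fix j
    obtain y z where "y \<in> ?S j" "\<And>w. w \<in> ?S j \<Longrightarrow> orthogonal z w" "column j B = y + z"
      using orthogonal_subspace_decomp_exists[of "(\<lambda>i. column i B) ` {..<j}" "column j B"] by (metis span_span)
    then show "\<exists>z. column j B - z \<in> ?S j \<and> (\<forall>w\<in>?S j. orthogonal z w)"
      by (intro exI[of _ z]) auto
  qed
  then obtain z where zS: "\<And>j. column j B - z j \<in> ?S j" and zo: "\<And>j w. w \<in> ?S j \<Longrightarrow> orthogonal (z j) w"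
    by metis
  have znz: "z j \<noteq> 0" for j
  proof
    assume "z j = 0"
    then have "column j B \<in> ?S j" using zS[of j] by simp
    then obtain v where v: "column j B = B *v v" "\<forall>i. i \<notin> {..<j} \<longrightarrow> v$i = 0"
      using span_cols_sub by blast
    have "column j B = B *v axis j 1"
      by (simp add: column_def matrix_vector_mult_def axis_def vec_eq_iff if_distrib[of "\<lambda>z. _ * z"] cong: if_cong)
    then have "B *v (axis j 1 - v) = 0" using v by (simp add: matrix_vector_mult_diff_distrib)
    then have "axis j 1 - v = 0" by (rule inj)
    then have "axis j 1 = v" by simp
    then show False using v(2) by (metis axis_nth lessThan_iff less_irrefl zero_neq_one)
  qed
  have Sj_mono: "?S i \<subseteq> ?S j" if "i \<le> j" for i j
    using that by (intro span_mono image_mono) auto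
  have zspan: "z j \<in> span ((\<lambda>i. column i B) ` {..j})" for j
  proof -
    have "column j B - z j \<in> span ((\<lambda>i. column i B) ` {..j})"
    proof -
      have "?S j \<subseteq> span ((\<lambda>i. column i B) ` {..j})" by (intro span_mono image_mono) auto
      then show ?thesis using zS[of j] by blast
    qed
    moreover have "column j B \<in> span ((\<lambda>i. column i B) ` {..j})" by (intro span_base) auto
    ultimately have "column j B - (column j B - z j) \<in> span ((\<lambda>i. column i B) ` {..j})" by (metis span_diff)
    then show ?thesis by simp
  qed
  define Q :: "((real,'p) vec, 'n) vec" where "Q = (\<chi> r j. (z j /\<^sub>R norm (z j))$r)"
  have cQ: "column j Q = z j /\<^sub>R norm (z j)" for j by (simp add: column_def Q_def vec_eq_iff)
  have qspan: "column j Q \<in> span ((\<lambda>i. column i B) ` {..j})" for j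
    unfolding cQ using zspan by (intro span_scale) auto
  have orth_lt: "inner (column i Q) (column j Q) = 0" if "i < j" for i j
  proof -
    have "span ((\<lambda>l. column l B) ` {..i}) \<subseteq> ?S j" using that by (intro span_mono image_mono) auto
    then have "column i Q \<in> ?S j" using qspan[of i] by blast
    then have "orthogonal (z j) (column i Q)" by (rule zo)
    then show ?thesis by (simp add: cQ orthogonal_def inner_commute)
  qed
  have orth: "inner (column i Q) (column j Q) = (if i = j then 1 else 0)" for i j
  proof (cases i j rule: linorder_cases)
    case less then show ?thesis using orth_lt by simp
  next
    case greater then show ?thesis using orth_lt[of j i] by (simp add: inner_commute)
  next
    case equal then show ?thesis using znz[of j] by (simp add: cQ dot_square_norm power2_eq_square)
  qed
  then have Qst: "Q \<in> stiefel" by (simp add: stiefel_iff)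
  define R where "R = transpose Q ** B"
  have Rij: "R$i$j = inner (column i Q) (column j B)" for i j by (simp add: R_def tmult_entry)
  have Rup: "upper_triangular_pos R"
    unfolding upper_triangular_pos_def
  proof (intro conjI allI impI)
    fix i j :: 'p assume "j < i"
    then have "column j B \<in> ?S i" by (intro span_base) auto
    then have "orthogonal (z i) (column j B)" by (rule zo)
    then show "R$i$j = 0" by (simp add: Rij cQ orthogonal_def)
  next
    fix j :: 'p
    have "inner (z j) (column j B) = inner (z j) (column j B - z j) + inner (z j) (z j)"
      by (simp add: inner_diff_right)
    also have "inner (z j) (column j B - z j) = 0" using zo[OF zS[of j]] by (simp add: orthogonal_def)
    finally have "inner (z j) (column j B) = (norm (z j))^2" by (simp add: dot_square_norm)
    then show "R$j$j > 0" using znz[of j] by (simp add: Rij cQ power2_eq_square)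
  qed
  have "B = Q ** R"
  proof (rule cols_eq)
    fix j
    have "span ((\<lambda>i. column i Q) ` UNIV) = span ((\<lambda>i. column i B) ` UNIV)"
    proof (rule span_cols_ge_dim)
      show "inner (column i Q) (column k Q) = (if i = k then 1 else 0)" for i k by (rule orth)
      show "(\<lambda>i. column i Q) ` UNIV \<subseteq> span ((\<lambda>i. column i B) ` UNIV)"
      proof clarify
        fix i
        have "span ((\<lambda>l. column l B) ` {..i}) \<subseteq> span ((\<lambda>i. column i B) ` UNIV)" by (intro span_mono image_mono) auto
        then show "column i Q \<in> span ((\<lambda>i. column i B) ` UNIV)" using qspan[of i] by blast
      qed
    qed
    moreover have "column j B \<in> span ((\<lambda>i. column i B) ` UNIV)" by (intro span_base) auto
    ultimately have "column j B = (\<Sum>i\<in>UNIV. inner (column i Q) (column j B) *\<^sub>R column i Q)"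
      by (intro ortho_expand) (auto simp: orth)
    also have "\<dots> = column j (Q ** R)" by (simp add: col_mult Rij)
    finally show "column j B = column j (Q ** R)" .
  qed
  then show ?thesis using Qst Rup by blast
qed

lemma qf_spec:
  fixes B :: "((real,'p::{finite,linorder}) vec, 'n::finite) vec"
  assumes inj: "\<And>v. B *v v = 0 \<Longrightarrow> v = 0"
  shows "qf B \<in> stiefel \<and> (\<exists>R. upper_triangular_pos R \<and> B = qf B ** R)"
proof -
  obtain Q R where QR: "Q \<in> stiefel" "upper_triangular_pos R" "B = Q ** R" using qr_exists[OF inj] by blast
  show ?thesis unfolding qf_def
  proof (rule theI[of _ Q])
    show "Q \<in> stiefel \<and> (\<exists>R. upper_triangular_pos R \<and> B = Q ** R)" using QR by blast
    fix Q' assume "Q' \<in> stiefel \<and> (\<exists>R. upper_triangular_pos R \<and> B = Q' ** R)"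
    then show "Q' = Q" using qr_unique[OF QR] by blast
  qed
qed




lemma trace_inv:
  fixes f :: "'i \<Rightarrow> real^'n" and g :: "'j \<Rightarrow> real^'n" and A :: "real^'n^'n"
  assumes I: "finite I" and J: "finite J"
    and fo: "\<And>i k. i \<in> I \<Longrightarrow> k \<in> I \<Longrightarrow> inner (f i) (f k) = (if i = k then 1 else 0)"
    and go: "\<And>i k. i \<in> J \<Longrightarrow> k \<in> J \<Longrightarrow> inner (g i) (g k) = (if i = k then 1 else 0)"
    and sp: "span (f ` I) = span (g ` J)"
  shows "(\<Sum>j\<in>J. inner (g j) (A *v g j)) = (\<Sum>i\<in>I. inner (f i) (A *v f i))"
proof -
  have ge: "g j = (\<Sum>i\<in>I. inner (f i) (g j) *\<^sub>R f i)" if "j \<in> J" for j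
    using that sp by (intro ortho_expand[OF I fo]) (auto intro: span_base)
  have fe: "f i = (\<Sum>j\<in>J. inner (g j) (f i) *\<^sub>R g j)" if "i \<in> I" for i
    using that sp by (intro ortho_expand[OF J go]) (auto intro: span_base simp flip: sp)
  have "(\<Sum>j\<in>J. inner (g j) (A *v g j)) = (\<Sum>j\<in>J. \<Sum>i\<in>I. inner (f i) (g j) * inner (f i) (A *v g j))"
  proof (rule sum.cong)
    fix j assume j: "j \<in> J"
    have "inner (g j) (A *v g j) = inner (\<Sum>i\<in>I. inner (f i) (g j) *\<^sub>R f i) (A *v g j)"
      using ge[OF j] by (metis (no_types, lifting))
    then show "inner (g j) (A *v g j) = (\<Sum>i\<in>I. inner (f i) (g j) * inner (f i) (A *v g j))"
      by (simp add: inner_sum_left)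
  qed simp
  also have "\<dots> = (\<Sum>i\<in>I. \<Sum>j\<in>J. inner (f i) (g j) * inner (f i) (A *v g j))"
    by (rule sum.swap)
  also have "\<dots> = (\<Sum>i\<in>I. inner (f i) (A *v f i))"
  proof (rule sum.cong)
    fix i assume i: "i \<in> I"
    have "A *v f i = (\<Sum>j\<in>J. inner (g j) (f i) *\<^sub>R (A *v g j))"
      by (subst fe[OF i]) (simp add: linear_sum[OF matrix_vector_mul_linear] matrix_vector_mult_scaleR)
    then have "inner (f i) (A *v f i) = (\<Sum>j\<in>J. inner (g j) (f i) * inner (f i) (A *v g j))"
      by (simp add: inner_sum_right)
    then show "(\<Sum>j\<in>J. inner (f i) (g j) * inner (f i) (A *v g j)) = inner (f i) (A *v f i)"
      by (simp add: inner_commute)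
  qed simp
  finally show ?thesis .
qed

lemma eps_zero:
  fixes c k :: real
  assumes "\<And>\<epsilon>. 2*\<epsilon>*c \<le> \<epsilon>^2 * k"
  shows "c = 0"
proof (rule ccontr)
  assume c: "c \<noteq> 0"
  define D where "D = \<bar>k\<bar> + 1"
  have D: "D > 0" unfolding D_def by simp
  have "2*(c/D)*c \<le> (c/D)^2 * k" by (rule assms)
  then have "2*c^2*D \<le> c^2 * k" using D by (simp add: field_simps power2_eq_square)
  also have "\<dots> \<le> c^2 * \<bar>k\<bar>" by (simp add: mult_left_mono)
  finally have "c^2 * (\<bar>k\<bar> + 2) \<le> 0" unfolding D_def by (simp add: algebra_simps)
  moreover have "c^2 * (\<bar>k\<bar> + 2) > 0" using c by simp
  ultimately show False by simp
qed

lemma max_orth: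
  fixes \<eta> :: "real^'p^'n" and v w :: "real^'p"
  assumes max: "\<And>u. u \<in> W \<Longrightarrow> inner (\<eta> *v u) (\<eta> *v u) \<le> lam * inner u u"
    and W: "subspace W" and vW: "v \<in> W" and wW: "w \<in> W"
    and vv: "inner v v = 1" and vlam: "inner (\<eta> *v v) (\<eta> *v v) = lam" and vw: "inner v w = 0"
  shows "inner (\<eta> *v v) (\<eta> *v w) = 0"
proof (rule eps_zero)
  fix \<epsilon> :: real
  define a where "a = inner (\<eta> *v v) (\<eta> *v w)"
  define b where "b = inner (\<eta> *v w) (\<eta> *v w)"
  define q where "q = inner w w"
  have "v + \<epsilon> *\<^sub>R w \<in> W" using W vW wW by (simp add: subspace_add subspace_scale)
  then have le: "inner (\<eta> *v (v + \<epsilon> *\<^sub>R w)) (\<eta> *v (v + \<epsilon> *\<^sub>R w)) \<le> lam * inner (v + \<epsilon> *\<^sub>R w) (v + \<epsilon> *\<^sub>R w)"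
    by (rule max)
  have "\<eta> *v (v + \<epsilon> *\<^sub>R w) = \<eta> *v v + \<epsilon> *\<^sub>R (\<eta> *v w)"
    by (simp add: matrix_vector_right_distrib matrix_vector_mult_scaleR)
  then have e1: "inner (\<eta> *v (v + \<epsilon> *\<^sub>R w)) (\<eta> *v (v + \<epsilon> *\<^sub>R w)) = lam + 2*\<epsilon>*a + \<epsilon>^2 * b"
    unfolding a_def b_def vlam[symmetric]
    by (simp add: inner_add_left inner_add_right inner_commute[of "\<eta> *v w" "\<eta> *v v"] power2_eq_square algebra_simps)
  have e2: "inner (v + \<epsilon> *\<^sub>R w) (v + \<epsilon> *\<^sub>R w) = 1 + \<epsilon>^2 * q"
    using vv vw unfolding q_def by (simp add: inner_add_left inner_add_right inner_commute[of w v] power2_eq_square algebra_simps)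
  have le2: "lam + 2*\<epsilon>*a + \<epsilon>^2 * b \<le> lam * (1 + \<epsilon>^2 * q)" using le unfolding e1 e2 .
  have "\<epsilon>^2 * (lam * q - b) = lam * (1 + \<epsilon>^2 * q) - lam - \<epsilon>^2 * b" by (simp add: algebra_simps)
  then show "2*\<epsilon>*inner (\<eta> *v v) (\<eta> *v w) \<le> \<epsilon>^2 * (lam * q - b)" using le2 unfolding a_def by linarith
qed




lemma spectral:
  fixes \<eta> :: "real^'p^'n" and W :: "(real^'p) set"
  assumes "subspace W"
  shows "\<exists>V. V \<subseteq> W \<and> finite V \<and> span V = W \<and> (\<forall>v\<in>V. \<forall>w\<in>V. inner v w = (if v = w then 1 else 0))
          \<and> (\<forall>v\<in>V. \<forall>w\<in>V. v \<noteq> w \<longrightarrow> inner (\<eta> *v v) (\<eta> *v w) = 0)"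
  using assms
proof (induction "dim W" arbitrary: W rule: less_induct)
  case less
  note W = less.prems
  show ?case
  proof (cases "W = {0}")
    case True then show ?thesis by (intro exI[of _ "{}"]) auto
  next
    case False
    then obtain w0 where w0: "w0 \<in> W" "w0 \<noteq> 0" using subspace_0[OF W] by blast
    let ?K = "W \<inter> sphere 0 1"
    let ?f = "\<lambda>u. inner (\<eta> *v u) (\<eta> *v u)"
    have Kc: "compact ?K" by (intro closed_Int_compact closed_subspace W compact_sphere)
    have "w0 /\<^sub>R norm w0 \<in> ?K" using w0 W by (simp add: subspace_scale)
    then have Kne: "?K \<noteq> {}" by blast
    have lin: "bounded_linear ((*v) \<eta>)" by (simp add: linear_conv_bounded_linear)
    have cont: "continuous_on ?K ?f"
      by (intro continuous_intros linear_continuous_on[OF lin])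
    obtain v where vK: "v \<in> ?K" and vmax: "\<And>u. u \<in> ?K \<Longrightarrow> ?f u \<le> ?f v"
      using continuous_attains_sup[OF Kc Kne cont] by blast
    define lam where "lam = ?f v"
    have vW: "v \<in> W" and vv: "inner v v = 1" using vK by (auto simp: dot_square_norm)
    have max: "?f u \<le> lam * inner u u" if uW: "u \<in> W" for u
    proof (cases "u = 0")
      case True then show ?thesis by simp
    next
      case False
      have "u /\<^sub>R norm u \<in> ?K" using uW False W by (simp add: subspace_scale)
      then have "?f (u /\<^sub>R norm u) \<le> lam" unfolding lam_def by (rule vmax)
      moreover have "?f (u /\<^sub>R norm u) = ?f u / (norm u)^2"
        by (simp add: matrix_vector_mult_scaleR power2_eq_square divide_inverse mult.commute mult.left_commute)
      ultimately have "?f u \<le> lam * (norm u)^2" using False by (simp add: divide_le_eq)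
      then show ?thesis by (simp add: dot_square_norm)
    qed
    define W' where "W' = {w \<in> W. inner v w = 0}"
    have W'sub: "subspace W'" unfolding W'_def subspace_def using W
      by (auto simp: subspace_add subspace_scale subspace_0 inner_add_right)
    have "v \<notin> W'" using vv unfolding W'_def by auto
    moreover have "W' \<subseteq> W" unfolding W'_def by auto
    ultimately have "W' \<subset> W" using vW by blast
    moreover have sW': "span W' = W'" using W'sub by simp
    moreover have sW: "span W = W" using W by simp
    ultimately have "span W' \<subset> span W" by (simp only: sW sW')
    then have "dim W' < dim W" by (metis dim_psubset dim_span)
    then obtain V' where V': "V' \<subseteq> W'" "finite V'" "span V' = W'"
      "\<forall>v\<in>V'. \<forall>w\<in>V'. inner v w = (if v = w then 1 else 0)"
      "\<forall>v\<in>V'. \<forall>w\<in>V'. v \<noteq> w \<longrightarrow> inner (\<eta> *v v) (\<eta> *v w) = 0"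
      using less.hyps[OF _ W'sub] by blast
    have vV': "v \<notin> V'" using V'(1) vv unfolding W'_def by auto
    have ov: "inner v w = 0" if "w \<in> V'" for w using V'(1) that unfolding W'_def by auto
    have oeta: "inner (\<eta> *v v) (\<eta> *v w) = 0" if "w \<in> V'" for w
      using max W vW _ vv lam_def ov[OF that] V'(1) that unfolding W'_def
      by (intro max_orth[where W=W and lam=lam]) auto
    show ?thesis
    proof (intro exI[of _ "insert v V'"] conjI ballI impI)
      show "insert v V' \<subseteq> W" using vW V'(1) unfolding W'_def by auto
      show "finite (insert v V')" using V'(2) by simp
      show "span (insert v V') = W"
      proof
        show "span (insert v V') \<subseteq> W" using vW V'(1) W unfolding W'_def
          by (intro span_minimal) auto
        show "W \<subseteq> span (insert v V')"
        proof
          fix w assume wW: "w \<in> W"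
          have "w - inner v w *\<^sub>R v \<in> W'" using wW vW vv W unfolding W'_def
            by (auto simp: subspace_diff subspace_scale inner_diff_right)
          then have "w - inner v w *\<^sub>R v \<in> span (insert v V')"
            using V'(3) span_mono[of V' "insert v V'"] by auto
          moreover have "inner v w *\<^sub>R v \<in> span (insert v V')" by (intro span_scale span_base) auto
          ultimately have "(w - inner v w *\<^sub>R v) + inner v w *\<^sub>R v \<in> span (insert v V')" by (rule span_add)
          then show "w \<in> span (insert v V')" by simp
        qed
      qed
      fix a b assume a: "a \<in> insert v V'" and b: "b \<in> insert v V'"
      show "inner a b = (if a = b then 1 else 0)"
        using a b V'(4) vv ov vV' by (auto simp: inner_commute)
      assume "a \<noteq> b"
      then show "inner (\<eta> *v a) (\<eta> *v b) = 0"
        using a b V'(5) oeta by (auto simp: inner_commute)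
    qed
  qed
qed




lemma brockett_expand:
  fixes A :: "real^'n^'n" and Q :: "real^'p^'n" and \<mu> :: "real^'p"
  shows "brockett A (diag_mat \<mu>) Q = (\<Sum>j\<in>UNIV. \<mu>$j * inner (column j Q) (A *v column j Q))"
proof -
  have d: "(M ** diag_mat \<mu>)$j$j = M$j$j * \<mu>$j" for M :: "real^'p^'p" and j
    by (simp add: matrix_matrix_mult_def diag_mat_def if_distrib[of "\<lambda>z. _ * z"] cong: if_cong)
  have e: "(transpose Q ** A ** Q)$j$j = inner (column j Q) (A *v column j Q)" for j
  proof -
    have "(transpose Q ** A ** Q)$j$j = (\<Sum>r\<in>UNIV. (\<Sum>s\<in>UNIV. Q$s$j * A$s$r) * Q$r$j)"
      by (simp add: matrix_matrix_mult_def transpose_def)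
    also have "\<dots> = (\<Sum>r\<in>UNIV. \<Sum>s\<in>UNIV. Q$s$j * (A$s$r * Q$r$j))"
      by (simp add: sum_distrib_right mult.assoc)
    also have "\<dots> = (\<Sum>s\<in>UNIV. \<Sum>r\<in>UNIV. Q$s$j * (A$s$r * Q$r$j))"
      by (rule sum.swap)
    also have "\<dots> = (\<Sum>s\<in>UNIV. Q$s$j * (\<Sum>r\<in>UNIV. A$s$r * Q$r$j))"
      by (simp add: sum_distrib_left)
    also have "\<dots> = inner (column j Q) (A *v column j Q)"
      by (simp add: column_def inner_vec_def matrix_vector_mult_def)
    finally show ?thesis .
  qed
  show ?thesis unfolding brockett_def trace_def d e by (simp add: mult.commute)
qed

lemma span_scale_family:
  fixes h :: "'i \<Rightarrow> 'a::real_vector"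
  assumes "\<And>v. v \<in> V \<Longrightarrow> c v \<noteq> 0"
  shows "span ((\<lambda>v. c v *\<^sub>R h v) ` V) = span (h ` V)"
  unfolding span_eq
proof (intro conjI subsetI)
  fix y assume "y \<in> (\<lambda>v. c v *\<^sub>R h v) ` V"
  then obtain v where "v \<in> V" "y = c v *\<^sub>R h v" by blast
  then show "y \<in> span (h ` V)" by (metis span_base span_scale image_eqI)
next
  fix y assume "y \<in> h ` V"
  then obtain v where v: "v \<in> V" "y = h v" by blast
  then have "y = (1 / c v) *\<^sub>R (c v *\<^sub>R h v)" using assms by simp
  then show "y \<in> span ((\<lambda>v. c v *\<^sub>R h v) ` V)" using v by (metis (no_types, lifting) image_eqI span_base span_scale)
qed

lemma stiefel_isom:
  assumes "X \<in> stiefel"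
  shows "inner (X *v v) (X *v w) = inner v w"
  using assms unfolding stiefel_def by (simp add: inner_mv_transpose matrix_vector_mul_assoc)

lemma tangent_cross:
  assumes "\<eta> \<in> stiefel_tangent X"
  shows "inner (X *v v) (\<eta> *v w) + inner (\<eta> *v v) (X *v w) = 0"
proof -
  have "inner (X *v v) (\<eta> *v w) + inner (\<eta> *v v) (X *v w) = inner v ((transpose X ** \<eta> + transpose \<eta> ** X) *v w)"
    by (simp add: inner_mv_transpose matrix_vector_mul_assoc matrix_vector_mult_add_rdistrib inner_add_right)
  also have "\<dots> = 0" using assms unfolding stiefel_tangent_def by simp
  finally show ?thesis .
qed

lemma gram:
  assumes X: "X \<in> stiefel" and \<eta>: "\<eta> \<in> stiefel_tangent X"
  shows "inner ((X + s *\<^sub>R \<eta>) *v v) ((X + s *\<^sub>R \<eta>) *v w) = inner v w + s^2 * inner (\<eta> *v v) (\<eta> *v w)"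
proof -
  have m: "(X + s *\<^sub>R \<eta>) *v u = X *v u + s *\<^sub>R (\<eta> *v u)" for u
    by (simp add: matrix_vector_mult_add_rdistrib scaleR_matrix_vector_assoc)
  have "inner ((X + s *\<^sub>R \<eta>) *v v) ((X + s *\<^sub>R \<eta>) *v w) =
     inner (X *v v) (X *v w) + s * (inner (X *v v) (\<eta> *v w) + inner (\<eta> *v v) (X *v w)) + s^2 * inner (\<eta> *v v) (\<eta> *v w)"
    unfolding m by (simp add: inner_add_left inner_add_right power2_eq_square algebra_simps)
  then show ?thesis using stiefel_isom[OF X] tangent_cross[OF \<eta>] by simp
qed



lemma key_S:
  fixes A :: "real^'n^'n" and X \<eta> :: "((real,'p::{finite,linorder}) vec, 'n::finite) vec"
    and V :: "(real,'p) vec set"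
  assumes Asym: "transpose A = A" and X: "X \<in> stiefel" and \<eta>: "\<eta> \<in> stiefel_tangent X"
    and S: "downset S" and Vfin: "finite V" and Vspan: "span V = span ((\<lambda>i. axis i 1) ` S)"
    and Vo: "\<forall>v\<in>V. \<forall>w\<in>V. inner v w = (if v = w then 1 else 0)"
    and Ve: "\<forall>v\<in>V. \<forall>w\<in>V. v \<noteq> w \<longrightarrow> inner (\<eta> *v v) (\<eta> *v w) = 0"
  shows "(\<Sum>i\<in>S. inner (column i (qf (X + s *\<^sub>R \<eta>))) (A *v column i (qf (X + s *\<^sub>R \<eta>))))
       = (\<Sum>v\<in>V. phi (inner (X *v v) (A *v (X *v v))) (inner (X *v v) (A *v (\<eta> *v v)))
                      (inner (\<eta> *v v) (A *v (\<eta> *v v))) (inner (\<eta> *v v) (\<eta> *v v)) s)"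
proof -
  define B where "B = X + s *\<^sub>R \<eta>"
  have gr: "inner (B *v v) (B *v w) = inner v w + s^2 * inner (\<eta> *v v) (\<eta> *v w)" for v w
    unfolding B_def by (rule gram[OF X \<eta>])
  have Bge: "inner (B *v v) (B *v v) \<ge> inner v v" for v
    unfolding gr by simp
  have inj: "v = 0" if "B *v v = 0" for v
  proof -
    have "inner v v \<le> 0" using Bge[of v] that by simp
    then show ?thesis by (metis inner_gt_zero_iff not_less)
  qed
  obtain R where QR: "qf B \<in> stiefel" "upper_triangular_pos R" "B = qf B ** R"
    using qf_spec[of B] inj by blast
  define Q where "Q = qf B"
  define g where "g v = (B *v v) /\<^sub>R norm (B *v v)" for v
  have Bnz: "B *v v \<noteq> 0" if "v \<in> V" for v
  proof
    assume "B *v v = 0"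
    then have "inner v v \<le> 0" using Bge[of v] by simp
    then show False using Vo that by auto
  qed
  have fo: "inner (column i Q) (column k Q) = (if i = k then 1 else 0)" for i k
    using QR(1) unfolding Q_def by (simp add: stiefel_iff)
  have go: "inner (g v) (g w) = (if v = w then 1 else 0)" if "v \<in> V" "w \<in> V" for v w
  proof (cases "v = w")
    case True then show ?thesis using Bnz[OF that(1)] by (simp add: g_def dot_square_norm power2_eq_square)
  next
    case False
    then have "inner (B *v v) (B *v w) = 0" unfolding gr using Vo Ve that by auto
    then show ?thesis using False by (simp add: g_def)
  qed
  have "span ((\<lambda>i. column i Q) ` S) = span ((\<lambda>i. column i B) ` S)"
    unfolding Q_def by (rule qr_span[OF QR(2) QR(3) S])
  also have "\<dots> = span ((\<lambda>i. B *v axis i 1) ` S)" by (simp add: matrix_vector_mult_basis)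
  also have "\<dots> = (\<lambda>x. B *v x) ` span ((\<lambda>i. axis i 1) ` S)"
    using span_linear_image[OF matrix_vector_mul_linear[of B], of "(\<lambda>i. axis i 1) ` S"] by (simp add: image_image)
  also have "\<dots> = (\<lambda>x. B *v x) ` span V" by (simp add: Vspan)
  also have "\<dots> = span ((\<lambda>v. B *v v) ` V)"
    using span_linear_image[OF matrix_vector_mul_linear[of B], of V] by simp
  also have "\<dots> = span (g ` V)" unfolding g_def
    by (rule span_scale_family[symmetric]) (use Bnz in simp)
  finally have sp: "span ((\<lambda>i. column i Q) ` S) = span (g ` V)" .
  have "(\<Sum>v\<in>V. inner (g v) (A *v g v)) = (\<Sum>i\<in>S. inner (column i Q) (A *v column i Q))"
    by (rule trace_inv[OF _ Vfin _ go sp]) (auto simp: fo)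
  moreover have "inner (g v) (A *v g v) = phi (inner (X *v v) (A *v (X *v v))) (inner (X *v v) (A *v (\<eta> *v v)))
                      (inner (\<eta> *v v) (A *v (\<eta> *v v))) (inner (\<eta> *v v) (\<eta> *v v)) s" if v: "v \<in> V" for v
  proof -
    have u: "B *v v = X *v v + s *\<^sub>R (\<eta> *v v)"
      unfolding B_def by (simp add: matrix_vector_mult_add_rdistrib scaleR_matrix_vector_assoc)
    have "inner (g v) (A *v g v) = inner (B *v v) (A *v (B *v v)) / inner (B *v v) (B *v v)"
      by (simp add: g_def matrix_vector_mult_scaleR dot_square_norm power2_eq_square divide_inverse mult.commute mult.left_commute)
    also have "\<dots> = phi (inner (X *v v) (A *v (X *v v))) (inner (X *v v) (A *v (\<eta> *v v)))
                      (inner (\<eta> *v v) (A *v (\<eta> *v v))) (inner (\<eta> *v v) (\<eta> *v v)) s"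
      unfolding u
    proof (rule rat_form[OF _ _ Asym])
      show "inner (X *v v) (X *v v) = 1" using stiefel_isom[OF X] Vo v by simp
      show "inner (X *v v) (\<eta> *v v) = 0" using tangent_cross[OF \<eta>, of v v] by (simp add: inner_commute)
    qed
    finally show ?thesis .
  qed
  ultimately show ?thesis unfolding Q_def B_def by simp
qed


lemma sum_bound_card:
  fixes f :: "'a \<Rightarrow> real"
  assumes "finite V" "card V \<le> N" "\<And>v. v \<in> V \<Longrightarrow> \<bar>f v\<bar> \<le> K" and K: "K \<ge> 0"
  shows "\<bar>\<Sum>v\<in>V. f v\<bar> \<le> real N * K"
proof -
  have "\<bar>\<Sum>v\<in>V. f v\<bar> \<le> (\<Sum>v\<in>V. \<bar>f v\<bar>)" by (rule sum_abs)
  also have "\<dots> \<le> real (card V) * K" using sum_bounded_above[of V "\<lambda>v. \<bar>f v\<bar>" K] assms(3) by simp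
  also have "\<dots> \<le> real N * K" using K assms(2) by (simp add: mult_right_mono)
  finally show ?thesis .
qed

lemma stiefel_lip:
  fixes A :: "((real,'n::finite) vec, 'n) vec" and \<mu> :: "(real,'p::{finite,linorder}) vec"
    and X \<eta> :: "((real,'p) vec, 'n) vec"
  assumes Asym: "transpose A = A" and X: "X \<in> stiefel" and \<eta>: "\<eta> \<in> stiefel_tangent X"
    and C: "norm \<eta> \<le> C" and t: "t \<ge> 0"
  shows "\<bar>deriv (\<lambda>s. brockett A (diag_mat \<mu>) (qf (X + s *\<^sub>R \<eta>))) t
          - deriv (\<lambda>s. brockett A (diag_mat \<mu>) (qf (X + s *\<^sub>R \<eta>))) 0\<bar>
         \<le> (\<Sum>j\<in>UNIV. \<bar>\<mu>$j\<bar>) * (2 * real CARD('p) * (9 * norm A * C^2 * t))"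
proof -
  have "\<forall>S. \<exists>V. finite V \<and> span V = span ((\<lambda>i. axis i 1) ` S) \<and>
          (\<forall>v\<in>V. \<forall>w\<in>V. inner v w = (if v = w then 1 else 0)) \<and>
          (\<forall>v\<in>V. \<forall>w\<in>V. v \<noteq> w \<longrightarrow> inner (\<eta> *v v) (\<eta> *v w) = 0)"
  proof
    fix S :: "'p set"
    show "\<exists>V. finite V \<and> span V = span ((\<lambda>i. axis i 1) ` S) \<and>
          (\<forall>v\<in>V. \<forall>w\<in>V. inner v w = (if v = w then 1 else 0)) \<and>
          (\<forall>v\<in>V. \<forall>w\<in>V. v \<noteq> w \<longrightarrow> inner (\<eta> *v v) (\<eta> *v w) = 0)"
      using spectral[of "span ((\<lambda>i. axis i (1::real)) ` S)" \<eta>] by auto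
  qed
  then obtain Vf where Vfin: "\<And>S. finite (Vf S)" and Vspan: "\<And>S. span (Vf S) = span ((\<lambda>i. axis i 1) ` S)"
    and Vo: "\<And>S. \<forall>v\<in>Vf S. \<forall>w\<in>Vf S. inner v w = (if v = w then 1 else 0)"
    and Ve: "\<And>S. \<forall>v\<in>Vf S. \<forall>w\<in>Vf S. v \<noteq> w \<longrightarrow> inner (\<eta> *v v) (\<eta> *v w) = 0"
    by metis
  define a where "a v = inner (X *v v) (A *v (X *v v))" for v
  define b where "b v = inner (X *v v) (A *v (\<eta> *v v))" for v
  define c where "c v = inner (\<eta> *v v) (A *v (\<eta> *v v))" for v
  define m where "m v = inner (\<eta> *v v) (\<eta> *v v)" for v :: "(real,'p) vec"
  define ph where "ph v s = phi (a v) (b v) (c v) (m v) s" for v s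
  define dph where "dph v s = dphi (a v) (b v) (c v) (m v) s" for v s
  define h where "h = (\<lambda>s. brockett A (diag_mat \<mu>) (qf (X + s *\<^sub>R \<eta>)))"
  define H where "H s = (\<Sum>j\<in>UNIV. \<mu>$j * ((\<Sum>v\<in>Vf {..j}. ph v s) - (\<Sum>v\<in>Vf {..<j}. ph v s)))" for s
  define H' where "H' s = (\<Sum>j\<in>UNIV. \<mu>$j * ((\<Sum>v\<in>Vf {..j}. dph v s) - (\<Sum>v\<in>Vf {..<j}. dph v s)))" for s
  have keyS: "(\<Sum>i\<in>S. inner (column i (qf (X + s *\<^sub>R \<eta>))) (A *v column i (qf (X + s *\<^sub>R \<eta>))))
       = (\<Sum>v\<in>Vf S. ph v s)" if "downset S" for S s
    unfolding ph_def a_def b_def c_def m_def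
    by (rule key_S[OF Asym X \<eta> that Vfin Vspan Vo Ve])
  have hH: "h = H"
  proof
    fix s
    let ?Q = "qf (X + s *\<^sub>R \<eta>)"
    have "h s = (\<Sum>j\<in>UNIV. \<mu>$j * inner (column j ?Q) (A *v column j ?Q))"
      unfolding h_def by (rule brockett_expand)
    also have "\<dots> = H s" unfolding H_def
    proof (rule sum.cong)
      fix j :: 'p
      have "{..j} = insert j {..<j}" by auto
      then have "(\<Sum>i\<in>{..j}. inner (column i ?Q) (A *v column i ?Q)) - (\<Sum>i\<in>{..<j}. inner (column i ?Q) (A *v column i ?Q))
            = inner (column j ?Q) (A *v column j ?Q)" by simp
      moreover have "(\<Sum>i\<in>{..j}. inner (column i ?Q) (A *v column i ?Q)) = (\<Sum>v\<in>Vf {..j}. ph v s)"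
        by (rule keyS) (auto simp: downset_def)
      moreover have "(\<Sum>i\<in>{..<j}. inner (column i ?Q) (A *v column i ?Q)) = (\<Sum>v\<in>Vf {..<j}. ph v s)"
        by (rule keyS) (auto simp: downset_def)
      ultimately show "\<mu>$j * inner (column j ?Q) (A *v column j ?Q) = \<mu>$j * ((\<Sum>v\<in>Vf {..j}. ph v s) - (\<Sum>v\<in>Vf {..<j}. ph v s))"
        by simp
    qed simp
    finally show "h s = H s" .
  qed
  have mnn: "m v \<ge> 0" for v unfolding m_def by simp
  have dS: "((\<lambda>s. \<Sum>v\<in>Vf S. ph v s) has_real_derivative (\<Sum>v\<in>Vf S. dph v s)) (at s)" for S s
    unfolding ph_def dph_def by (intro DERIV_sum phi_deriv mnn)
  have dH: "(H has_real_derivative H' s) (at s)" for s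
    unfolding H_def[abs_def] H'_def by (intro DERIV_sum DERIV_cmult DERIV_diff dS)
  have derivH: "deriv h s = H' s" for s unfolding hH by (rule DERIV_imp_deriv[OF dH])
  define L0 where "L0 = 9 * norm A * C^2 * t"
  have vb: "\<bar>dph v t - dph v 0\<bar> \<le> L0" if "v \<in> Vf S" for v S
  proof -
    have vv: "inner v v = 1" using Vo[of S] that by simp
    then have nx: "norm (X *v v) = 1" using stiefel_isom[OF X, of v v] by (simp add: norm_eq_1)
    have "norm (\<eta> *v v) \<le> norm \<eta> * norm v" by (rule norm_mv)
    also have "\<dots> \<le> C"
    proof -
      have "norm v = 1" using vv by (simp add: norm_eq_1)
      then show ?thesis using C by simp
    qed
    finally have "norm (\<eta> *v v) \<le> C" .
    then have "inner (\<eta> *v v) (\<eta> *v v) \<le> C^2"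
      by (metis dot_square_norm norm_ge_zero power_mono)
    then show ?thesis unfolding dph_def L0_def a_def b_def c_def m_def
      by (rule phi_lip[OF nx _ t])
  qed
  have cardV: "card (Vf S) \<le> CARD('p)" for S
  proof -
    have "independent (id ` Vf S)" using orthonormal_indep[of "Vf S" id] Vo[of S] by auto
    then have "card (Vf S) \<le> DIM((real,'p) vec)" using independent_bound by fastforce
    then show ?thesis by simp
  qed
  have L0nn: "0 \<le> L0" unfolding L0_def using t by simp
  have sb: "\<bar>\<Sum>v\<in>Vf S. dph v t - dph v 0\<bar> \<le> real CARD('p) * L0" for S
    by (rule sum_bound_card[OF Vfin cardV vb L0nn])
  have "H' t - H' 0 = (\<Sum>j\<in>UNIV. \<mu>$j * ((\<Sum>v\<in>Vf {..j}. dph v t) - (\<Sum>v\<in>Vf {..<j}. dph v t)) - \<mu>$j * ((\<Sum>v\<in>Vf {..j}. dph v 0) - (\<Sum>v\<in>Vf {..<j}. dph v 0)))"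
    unfolding H'_def by (simp add: sum_subtractf)
  also have "\<dots> = (\<Sum>j\<in>UNIV. \<mu>$j * ((\<Sum>v\<in>Vf {..j}. dph v t - dph v 0) - (\<Sum>v\<in>Vf {..<j}. dph v t - dph v 0)))"
    by (intro sum.cong refl) (simp add: sum_subtractf algebra_simps)
  finally have eqH: "H' t - H' 0 = (\<Sum>j\<in>UNIV. \<mu>$j * ((\<Sum>v\<in>Vf {..j}. dph v t - dph v 0) - (\<Sum>v\<in>Vf {..<j}. dph v t - dph v 0)))" .
  have "\<bar>H' t - H' 0\<bar> \<le> (\<Sum>j\<in>UNIV. \<bar>\<mu>$j\<bar> * (2 * real CARD('p) * L0))"
  proof -
    have jb: "\<bar>\<mu>$j * ((\<Sum>v\<in>Vf {..j}. dph v t - dph v 0) - (\<Sum>v\<in>Vf {..<j}. dph v t - dph v 0))\<bar> \<le> \<bar>\<mu>$j\<bar> * (2 * real CARD('p) * L0)" for j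
    proof -
      have "\<bar>(\<Sum>v\<in>Vf {..j}. dph v t - dph v 0) - (\<Sum>v\<in>Vf {..<j}. dph v t - dph v 0)\<bar> \<le> 2 * real CARD('p) * L0"
        using sb[of "{..j}"] sb[of "{..<j}"] by linarith
      then show ?thesis by (simp add: abs_mult mult_left_mono)
    qed
    show ?thesis unfolding eqH by (rule order_trans[OF sum_abs sum_mono]) (rule jb)
  qed
  also have "\<dots> = (\<Sum>j\<in>UNIV. \<bar>\<mu>$j\<bar>) * (2 * real CARD('p) * L0)" by (rule sum_distrib_right[symmetric])
  finally show ?thesis unfolding h_def[symmetric] derivH L0_def .
qed




lemma smooth_subset_cont:
  assumes "smooth_on_subset S f"
  shows "continuous_on S f"
proof -
  have "continuous (at z within S) f" if z: "z \<in> S" for z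
  proof -
    obtain U F where U: "z \<in> U" "smooth_on U F" "\<forall>w\<in>U \<inter> S. F w = f w"
      using assms z unfolding smooth_on_subset_def by blast
    have oU: "open U" and cF: "continuous_on U F"
      using U(2) unfolding smooth_on_def by (metis ddiff.simps(1))+
    have "isCont F z" using cF oU U(1) by (simp add: continuous_on_eq_continuous_at)
    then have c1: "continuous (at z within S) F" by (rule continuous_at_imp_continuous_within)
    obtain d where d: "d > 0" "ball z d \<subseteq> U" using oU U(1) open_contains_ball by blast
    show ?thesis
    proof (rule continuous_transform_within[OF c1 d(1) z])
      fix x' assume "x' \<in> S" "dist x' z < d"
      then have "x' \<in> ball z d" by (simp add: dist_commute)
      then have "x' \<in> U" using d(2) by blast
      then show "F x' = f x'" using U(3) \<open>x' \<in> S\<close> by blast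
    qed
  qed
  then show ?thesis by (simp add: continuous_on_eq_continuous_within)
qed

lemma cont_tmult: "continuous_on UNIV (\<lambda>z. transpose (f z) ** (g z :: real^'q^'n))"
  if "continuous_on UNIV f" "continuous_on UNIV g" for f :: "'a::topological_space \<Rightarrow> real^'p^'n"
  unfolding matrix_matrix_mult_def transpose_def
  by (intro continuous_intros that)

lemma stiefel_norm: "X \<in> stiefel \<Longrightarrow> norm X = sqrt (real CARD('p))"
  for X :: "real^'p^'n"
proof -
  assume X: "X \<in> stiefel"
  have "(norm X)^2 = (\<Sum>i\<in>UNIV. \<Sum>j\<in>UNIV. X$i$j * X$i$j)"
    by (simp add: power2_norm_eq_inner inner_vec_def)
  also have "\<dots> = (\<Sum>j\<in>UNIV. \<Sum>i\<in>UNIV. X$i$j * X$i$j)" by (rule sum.swap)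
  also have "\<dots> = (\<Sum>j\<in>(UNIV::'p set). inner (column j X) (column j X))"
    by (simp add: column_def inner_vec_def)
  also have "\<dots> = real CARD('p)" using X by (simp add: stiefel_iff)
  finally show ?thesis by (metis norm_ge_zero real_sqrt_abs2 real_sqrt_unique)
qed

lemma compact_stiefel: "compact (stiefel :: (real^'p^'n) set)"
proof (rule compact_eq_bounded_closed[THEN iffD2], rule conjI)
  show "bounded (stiefel :: (real^'p^'n) set)"
    unfolding bounded_iff using stiefel_norm by (metis order_refl)
  have "closed {X :: real^'p^'n. transpose X ** X = mat 1}"
    by (intro closed_Collect_eq cont_tmult continuous_on_id continuous_on_const)
  then show "closed (stiefel :: (real^'p^'n) set)" unfolding stiefel_def .
qed

lemma tangent_scale: "\<eta> \<in> stiefel_tangent X \<Longrightarrow> r *\<^sub>R \<eta> \<in> stiefel_tangent X"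
  unfolding stiefel_tangent_def
  by (simp add: transpose_scalar matrix_scalar_ac flip: scalar_matrix_assoc scaleR_right_distrib)

lemma metric_bound:
  fixes g :: "((real, 'p::finite) vec, 'n::finite) vec \<Rightarrow> ((real, 'p) vec, 'n) vec \<Rightarrow> ((real, 'p) vec, 'n) vec \<Rightarrow> real"
  assumes g: "riemannian_metric_stiefel g"
  shows "\<exists>C. \<forall>X\<in>stiefel. \<forall>\<eta>\<in>stiefel_tangent X. g X \<eta> \<eta> = 1 \<longrightarrow> norm \<eta> \<le> C"
proof -
  let ?SS = "{(X, \<xi>, \<eta>). X \<in> stiefel \<and> \<xi> \<in> stiefel_tangent X \<and> \<eta> \<in> stiefel_tangent X}"
  let ?G = "\<lambda>(X, \<xi>, \<eta>). g X \<xi> \<eta>"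
  have lin: "\<And>X \<xi> \<eta>' \<zeta> a b. X \<in> stiefel \<Longrightarrow> \<xi> \<in> stiefel_tangent X \<Longrightarrow> \<eta>' \<in> stiefel_tangent X \<Longrightarrow> \<zeta> \<in> stiefel_tangent X \<Longrightarrow>
            g X (a *\<^sub>R \<xi> + b *\<^sub>R \<eta>') \<zeta> = a * g X \<xi> \<zeta> + b * g X \<eta>' \<zeta>"
    and sym: "\<And>X \<xi> \<eta>'. X \<in> stiefel \<Longrightarrow> \<xi> \<in> stiefel_tangent X \<Longrightarrow> \<eta>' \<in> stiefel_tangent X \<Longrightarrow> g X \<xi> \<eta>' = g X \<eta>' \<xi>"
    and pos: "\<And>X \<xi>. X \<in> stiefel \<Longrightarrow> \<xi> \<in> stiefel_tangent X \<Longrightarrow> \<xi> \<noteq> 0 \<Longrightarrow> g X \<xi> \<xi> > 0"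
    using g unfolding riemannian_metric_stiefel_def by blast+
  have homog: "g X (r *\<^sub>R \<xi>) (r *\<^sub>R \<xi>) = r^2 * g X \<xi> \<xi>" if "X \<in> stiefel" "\<xi> \<in> stiefel_tangent X" for X \<xi> r
  proof -
    have l1: "g X (r *\<^sub>R \<xi>) \<zeta> = r * g X \<xi> \<zeta>" if "\<zeta> \<in> stiefel_tangent X" for \<zeta>
      using lin[of X \<xi> \<xi> \<zeta> r 0] \<open>X \<in> stiefel\<close> \<open>\<xi> \<in> stiefel_tangent X\<close> that by simp
    have rt: "r *\<^sub>R \<xi> \<in> stiefel_tangent X" using that(2) by (rule tangent_scale)
    have "g X (r *\<^sub>R \<xi>) (r *\<^sub>R \<xi>) = r * g X \<xi> (r *\<^sub>R \<xi>)" using l1 rt by simp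
    also have "g X \<xi> (r *\<^sub>R \<xi>) = g X (r *\<^sub>R \<xi>) \<xi>" using sym that rt by simp
    also have "\<dots> = r * g X \<xi> \<xi>" using l1 that by simp
    finally show ?thesis by (simp add: power2_eq_square)
  qed
  have contG: "continuous_on ?SS ?G"
    using g unfolding riemannian_metric_stiefel_def by (intro smooth_subset_cont) blast
  let ?T = "(stiefel \<times> sphere (0::real^'p^'n) 1) \<inter> {z. transpose (fst z) ** snd z + transpose (snd z) ** fst z = 0}"
  have Tc: "compact ?T"
  proof (rule compact_Int_closed)
    show "compact (stiefel \<times> sphere (0::real^'p^'n) 1)" by (intro compact_Times compact_stiefel compact_sphere)
    show "closed {z :: (real^'p^'n) \<times> (real^'p^'n). transpose (fst z) ** snd z + transpose (snd z) ** fst z = 0}"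
      by (intro closed_Collect_eq continuous_intros cont_tmult continuous_on_fst continuous_on_snd continuous_on_id)
  qed
  have Tmem: "(X, \<eta>) \<in> ?T \<longleftrightarrow> X \<in> stiefel \<and> \<eta> \<in> stiefel_tangent X \<and> norm \<eta> = 1" for X \<eta>
    by (auto simp: stiefel_tangent_def)
  let ?k = "\<lambda>z. g (fst z) (snd z) (snd z)"
  have contk: "continuous_on ?T ?k"
  proof -
    have "continuous_on ?T (?G \<circ> (\<lambda>z. (fst z, snd z, snd z)))"
    proof (rule continuous_on_compose)
      show "continuous_on ?T (\<lambda>z. (fst z, snd z, snd z))" by (intro continuous_intros)
      show "continuous_on ((\<lambda>z. (fst z, snd z, snd z)) ` ?T) ?G"
        by (rule continuous_on_subset[OF contG]) (auto simp: stiefel_tangent_def)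
    qed
    then show ?thesis by (simp add: o_def case_prod_beta)
  qed
  obtain c where c: "c > 0" "\<And>X \<eta>. (X, \<eta>) \<in> ?T \<Longrightarrow> ?k (X, \<eta>) \<ge> c"
  proof (cases "?T = {}")
    case True then show ?thesis using that[of 1] by auto
  next
    case False
    obtain z where z: "z \<in> ?T" "\<And>y. y \<in> ?T \<Longrightarrow> ?k z \<le> ?k y"
      using continuous_attains_inf[OF Tc False contk] by blast
    have zT: "fst z \<in> stiefel" "snd z \<in> stiefel_tangent (fst z)" "norm (snd z) = 1"
      using z(1) Tmem[of "fst z" "snd z"] by auto
    have "snd z \<noteq> 0" using zT(3) by auto
    then have "?k z > 0" using pos[OF zT(1,2)] by simp
    then show ?thesis using that[of "?k z"] z(2) by auto
  qed
  show ?thesis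
  proof (intro exI[of _ "sqrt (1 / c)"] ballI impI)
    fix X \<eta> assume X: "X \<in> stiefel" and \<eta>: "\<eta> \<in> stiefel_tangent X" and g1: "g X \<eta> \<eta> = 1"
    have "\<eta> \<noteq> 0"
    proof
      assume "\<eta> = 0"
      then have "g X \<eta> \<eta> = 0^2 * g X \<eta> \<eta>" using homog[OF X \<eta>, of 0] by simp
      then show False using g1 by simp
    qed
    then have nz: "norm \<eta> > 0" by simp
    define w where "w = (1 / norm \<eta>) *\<^sub>R \<eta>"
    have "(X, w) \<in> ?T" unfolding Tmem w_def using X tangent_scale[OF \<eta>] nz by simp
    then have "c \<le> g X w w" using c(2) by fastforce
    also have "g X w w = (1 / norm \<eta>)^2" unfolding w_def homog[OF X \<eta>] g1 by simp
    finally have "c \<le> 1 / (norm \<eta>)^2" by (simp add: power_divide)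
    then have "(norm \<eta>)^2 \<le> 1 / c" using nz c(1) by (simp add: field_simps)
    then show "norm \<eta> \<le> sqrt (1 / c)" using real_le_rsqrt by blast
  qed
qed


theorem mainTheorem6:
  fixes A :: "((real, 'n::{finite,linorder}) vec, 'n) vec"
  assumes "CARD('p) \<le> CARD('n)"
    and "transpose A = A"
  shows
   "(\<forall>(\<mu>::(real, 'p::{finite,linorder}) vec) (g :: ((real, 'p) vec, 'n) vec \<Rightarrow> ((real, 'p) vec, 'n) vec \<Rightarrow> ((real, 'p) vec, 'n) vec \<Rightarrow> real).
       (\<forall>i. 0 < \<mu> $ i) \<and> (\<forall>i j. i < j \<longrightarrow> \<mu> $ i < \<mu> $ j) \<and> riemannian_metric_stiefel g \<longrightarrow>
       (\<exists>L>0. \<forall>X\<in>stiefel. \<forall>\<eta>\<in>stiefel_tangent X. g X \<eta> \<eta> = 1 \<longrightarrow>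
          (\<forall>t\<ge>0.
             \<bar>deriv (\<lambda>s. brockett A (diag_mat \<mu>) (qf (X + s *\<^sub>R \<eta>))) t
              - deriv (\<lambda>s. brockett A (diag_mat \<mu>) (qf (X + s *\<^sub>R \<eta>))) 0\<bar> \<le> L * t)))
    \<and>
    (\<exists>L>0. \<forall>x::(real, 'n) vec. norm x = 1 \<longrightarrow> (\<forall>\<eta>. x \<bullet> \<eta> = 0 \<longrightarrow> example_metric x \<eta> \<eta> = 1 \<longrightarrow>
          (\<forall>t\<ge>0.
             \<bar>deriv (\<lambda>s. rayleigh A (sphere_retr x (s *\<^sub>R \<eta>))) t
              - deriv (\<lambda>s. rayleigh A (sphere_retr x (s *\<^sub>R \<eta>))) 0\<bar>
             \<le> L * t)))"
proof (intro conjI)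
  show "\<forall>(\<mu>::(real, 'p::{finite,linorder}) vec) (g :: ((real, 'p) vec, 'n) vec \<Rightarrow> ((real, 'p) vec, 'n) vec \<Rightarrow> ((real, 'p) vec, 'n) vec \<Rightarrow> real).
       (\<forall>i. 0 < \<mu> $ i) \<and> (\<forall>i j. i < j \<longrightarrow> \<mu> $ i < \<mu> $ j) \<and> riemannian_metric_stiefel g \<longrightarrow>
       (\<exists>L>0. \<forall>X\<in>stiefel. \<forall>\<eta>\<in>stiefel_tangent X. g X \<eta> \<eta> = 1 \<longrightarrow>
          (\<forall>t\<ge>0.
             \<bar>deriv (\<lambda>s. brockett A (diag_mat \<mu>) (qf (X + s *\<^sub>R \<eta>))) t
              - deriv (\<lambda>s. brockett A (diag_mat \<mu>) (qf (X + s *\<^sub>R \<eta>))) 0\<bar> \<le> L * t))"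
  proof (intro allI impI)
    fix \<mu> :: "(real, 'p::{finite,linorder}) vec"
      and g :: "((real, 'p) vec, 'n) vec \<Rightarrow> ((real, 'p) vec, 'n) vec \<Rightarrow> ((real, 'p) vec, 'n) vec \<Rightarrow> real"
    assume H: "(\<forall>i. 0 < \<mu> $ i) \<and> (\<forall>i j. i < j \<longrightarrow> \<mu> $ i < \<mu> $ j) \<and> riemannian_metric_stiefel g"
    obtain C where C: "\<forall>X\<in>stiefel. \<forall>\<eta>\<in>stiefel_tangent X. g X \<eta> \<eta> = 1 \<longrightarrow> norm \<eta> \<le> C"
      using metric_bound[of g] H by blast
    define K where "K = (\<Sum>j\<in>UNIV. \<bar>\<mu>$j\<bar>) * (2 * real CARD('p) * (9 * norm A * C^2))"
    have K0: "K \<ge> 0" unfolding K_def by (intro mult_nonneg_nonneg sum_nonneg) auto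
    show "\<exists>L>0. \<forall>X\<in>stiefel. \<forall>\<eta>\<in>stiefel_tangent X. g X \<eta> \<eta> = 1 \<longrightarrow>
          (\<forall>t\<ge>0.
             \<bar>deriv (\<lambda>s. brockett A (diag_mat \<mu>) (qf (X + s *\<^sub>R \<eta>))) t
              - deriv (\<lambda>s. brockett A (diag_mat \<mu>) (qf (X + s *\<^sub>R \<eta>))) 0\<bar> \<le> L * t)"
    proof (intro exI[of _ "K + 1"] conjI ballI impI allI)
      show "0 < K + 1" using K0 by simp
      fix X \<eta> and t :: real
      assume X: "X \<in> stiefel" and \<eta>: "\<eta> \<in> stiefel_tangent X" and g1: "g X \<eta> \<eta> = 1" and t: "0 \<le> t"
      have nC: "norm \<eta> \<le> C" using C X \<eta> g1 by blast
      have "\<bar>deriv (\<lambda>s. brockett A (diag_mat \<mu>) (qf (X + s *\<^sub>R \<eta>))) t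
              - deriv (\<lambda>s. brockett A (diag_mat \<mu>) (qf (X + s *\<^sub>R \<eta>))) 0\<bar>
         \<le> (\<Sum>j\<in>UNIV. \<bar>\<mu>$j\<bar>) * (2 * real CARD('p) * (9 * norm A * C^2 * t))"
        by (rule stiefel_lip[OF assms(2) X \<eta> nC t])
      also have "\<dots> = K * t" unfolding K_def by (simp add: mult.assoc)
      also have "\<dots> \<le> (K + 1) * t" using t by (simp add: mult_right_mono)
      finally show "\<bar>deriv (\<lambda>s. brockett A (diag_mat \<mu>) (qf (X + s *\<^sub>R \<eta>))) t
              - deriv (\<lambda>s. brockett A (diag_mat \<mu>) (qf (X + s *\<^sub>R \<eta>))) 0\<bar> \<le> (K + 1) * t" .
    qed
  qed
  show "\<exists>L>0. \<forall>x::(real, 'n) vec. norm x = 1 \<longrightarrow> (\<forall>\<eta>. x \<bullet> \<eta> = 0 \<longrightarrow> example_metric x \<eta> \<eta> = 1 \<longrightarrow>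
          (\<forall>t\<ge>0.
             \<bar>deriv (\<lambda>s. rayleigh A (sphere_retr x (s *\<^sub>R \<eta>))) t
              - deriv (\<lambda>s. rayleigh A (sphere_retr x (s *\<^sub>R \<eta>))) 0\<bar>
             \<le> L * t))"
    by (rule sphere_part[OF assms(2)])
qed

end
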